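(* Let $A$, $B$, $C$, and $D$ be finite posets, with $A$ connected and non-empty. Assume that $A\times B\cong C\times D$. Then there exist posets $W$, $X$, $Y$, and $Z$ such that $A\cong W\times X$, $B\cong Y\times Z$, $C\cong W\times Y$, and $D\cong X\times Z$.
   Context: Products of posets are ordered componentwise; posets may be empty. *)

theory Defs
  imports Main
begin

text \<open>A poset is given by a carrier set S and an order relation r \<subseteq> S \<times> S
  (library notion partial_order_on: reflexive on S, transitive, antisymmetric).\<close>

definition prod_order :: "('a \<times> 'a) set \<Rightarrow> ('b \<times> 'b) set \<Rightarrow> (('a \<times> 'b) \<times> ('a \<times> 'b)) set" where
  "prod_order r s = {((a, b), (a', b')). (a, a') \<in> r \<and> (b, b') \<in> s}"

definition order_iso :: "'a set \<Rightarrow> ('a \<times> 'a) set \<Rightarrow> 'b set \<Rightarrow> ('b \<times> 'b) set \<Rightarrow> bool" where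
  "order_iso S r T s \<longleftrightarrow> (\<exists>f. bij_betw f S T \<and>
      (\<forall>x\<in>S. \<forall>y\<in>S. (x, y) \<in> r \<longleftrightarrow> (f x, f y) \<in> s))"

definition connected_poset :: "'a set \<Rightarrow> ('a \<times> 'a) set \<Rightarrow> bool" where
  "connected_poset S r \<longleftrightarrow> (\<forall>x\<in>S. \<forall>y\<in>S. (x, y) \<in> (r \<union> r\<inverse>)\<^sup>*)"

end

theory Submission
  imports Defs
begin

lemma prod_order_iff[simp]: "((a,b),(a',b')) \<in> prod_order r s \<longleftrightarrow> (a,a') \<in> r \<and> (b,b') \<in> s"
  by (simp add: prod_order_def)

lemma prod_order_mem: "(x,y) \<in> prod_order r s \<longleftrightarrow> (fst x, fst y) \<in> r \<and> (snd x, snd y) \<in> s"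
  by (cases x; cases y) simp

lemma po_sub: "partial_order_on S r \<Longrightarrow> r \<subseteq> S \<times> S"
  by (simp add: partial_order_on_def preorder_on_def)

lemma po_refl: "partial_order_on S r \<Longrightarrow> x \<in> S \<Longrightarrow> (x,x) \<in> r"
  by (simp add: partial_order_on_def preorder_on_def refl_on_def)

lemma po_trans: "partial_order_on S r \<Longrightarrow> (x,y) \<in> r \<Longrightarrow> (y,z) \<in> r \<Longrightarrow> (x,z) \<in> r"
  unfolding partial_order_on_def preorder_on_def trans_def by blast

lemma po_antisym: "partial_order_on S r \<Longrightarrow> (x,y) \<in> r \<Longrightarrow> (y,x) \<in> r \<Longrightarrow> x = y"
  unfolding partial_order_on_def antisym_def by blast

lemma po_memD: "partial_order_on S r \<Longrightarrow> (x,y) \<in> r \<Longrightarrow> x \<in> S \<and> y \<in> S"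
  using po_sub by blast

lemma po_intro:
  assumes "r \<subseteq> S \<times> S" "\<And>x. x \<in> S \<Longrightarrow> (x,x) \<in> r"
    "\<And>x y z. (x,y) \<in> r \<Longrightarrow> (y,z) \<in> r \<Longrightarrow> (x,z) \<in> r"
    "\<And>x y. (x,y) \<in> r \<Longrightarrow> (y,x) \<in> r \<Longrightarrow> x = y"
  shows "partial_order_on S r"
  using assms unfolding partial_order_on_def preorder_on_def refl_on_def trans_def antisym_def
  by blast

lemma po_prod:
  assumes "partial_order_on S r" "partial_order_on T s"
  shows "partial_order_on (S \<times> T) (prod_order r s)"
proof (rule po_intro)
  show "prod_order r s \<subseteq> (S \<times> T) \<times> (S \<times> T)"
    using po_sub[OF assms(1)] po_sub[OF assms(2)] by (auto simp: prod_order_def)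
  show "\<And>x. x \<in> S \<times> T \<Longrightarrow> (x, x) \<in> prod_order r s"
    using po_refl[OF assms(1)] po_refl[OF assms(2)] by (auto simp: prod_order_def)
  show "\<And>x y z. (x, y) \<in> prod_order r s \<Longrightarrow> (y, z) \<in> prod_order r s \<Longrightarrow> (x, z) \<in> prod_order r s"
    using po_trans[OF assms(1)] po_trans[OF assms(2)] by (auto simp: prod_order_def)
  show "\<And>x y. (x, y) \<in> prod_order r s \<Longrightarrow> (y, x) \<in> prod_order r s \<Longrightarrow> x = y"
    using po_antisym[OF assms(1)] po_antisym[OF assms(2)] by (auto simp: prod_order_def)
qed

lemma po_restr: "partial_order_on S r \<Longrightarrow> S' \<subseteq> S \<Longrightarrow> partial_order_on S' (r \<inter> S' \<times> S')"
  by (rule po_intro) (auto dest: po_trans po_antisym intro: po_refl)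

lemma prod_order_sub: "partial_order_on S r \<Longrightarrow> partial_order_on T s \<Longrightarrow> prod_order r s \<subseteq> (S \<times> T) \<times> (S \<times> T)"
  using po_prod po_sub by blast

lemma isoI:
  assumes "bij_betw f S T" "\<And>x y. x \<in> S \<Longrightarrow> y \<in> S \<Longrightarrow> (x,y) \<in> r \<longleftrightarrow> (f x, f y) \<in> s"
  shows "order_iso S r T s"
  using assms unfolding order_iso_def by blast

lemma iso_refl: "order_iso S r S r"
  by (rule isoI[of id]) auto

lemma iso_sym:
  assumes "order_iso S r T s" shows "order_iso T s S r"
proof -
  obtain f where f: "bij_betw f S T" "\<forall>x\<in>S. \<forall>y\<in>S. (x,y) \<in> r \<longleftrightarrow> (f x, f y) \<in> s"
    using assms unfolding order_iso_def by blast
  let ?g = "inv_into S f"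
  have g: "bij_betw ?g T S" by (rule bij_betw_inv_into[OF f(1)])
  show ?thesis
  proof (rule isoI[OF g])
    fix x y assume "x \<in> T" "y \<in> T"
    then have "?g x \<in> S" "?g y \<in> S" "f (?g x) = x" "f (?g y) = y"
      using f(1) by (auto simp: bij_betw_def inv_into_into f_inv_into_f)
    then show "(x, y) \<in> s \<longleftrightarrow> (?g x, ?g y) \<in> r" using f(2) by metis
  qed
qed

lemma iso_trans:
  assumes "order_iso S r T s" "order_iso T s U u" shows "order_iso S r U u"
proof -
  obtain f where f: "bij_betw f S T" "\<forall>x\<in>S. \<forall>y\<in>S. (x,y) \<in> r \<longleftrightarrow> (f x, f y) \<in> s"
    using assms(1) unfolding order_iso_def by blast
  obtain g where g: "bij_betw g T U" "\<forall>x\<in>T. \<forall>y\<in>T. (x,y) \<in> s \<longleftrightarrow> (g x, g y) \<in> u"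
    using assms(2) unfolding order_iso_def by blast
  show ?thesis
  proof (rule isoI[of "g \<circ> f"])
    show "bij_betw (g \<circ> f) S U" using f(1) g(1) by (rule bij_betw_trans)
    fix x y assume "x \<in> S" "y \<in> S"
    then have "f x \<in> T" "f y \<in> T" using f(1) by (auto simp: bij_betw_def)
    then show "(x, y) \<in> r \<longleftrightarrow> ((g \<circ> f) x, (g \<circ> f) y) \<in> u"
      using f(2) g(2) \<open>x \<in> S\<close> \<open>y \<in> S\<close> by simp
  qed
qed

lemma iso_prod:
  assumes "order_iso S r S' r'" "order_iso T s T' s'"
  shows "order_iso (S \<times> T) (prod_order r s) (S' \<times> T') (prod_order r' s')"
proof -
  obtain f where f: "bij_betw f S S'" "\<forall>x\<in>S. \<forall>y\<in>S. (x,y) \<in> r \<longleftrightarrow> (f x, f y) \<in> r'"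
    using assms(1) unfolding order_iso_def by blast
  obtain g where g: "bij_betw g T T'" "\<forall>x\<in>T. \<forall>y\<in>T. (x,y) \<in> s \<longleftrightarrow> (g x, g y) \<in> s'"
    using assms(2) unfolding order_iso_def by blast
  show ?thesis
  proof (rule isoI[of "map_prod f g"])
    show "bij_betw (map_prod f g) (S \<times> T) (S' \<times> T')" using f(1) g(1) by (rule bij_betw_map_prod)
    fix x y assume "x \<in> S \<times> T" "y \<in> S \<times> T"
    then show "(x, y) \<in> prod_order r s \<longleftrightarrow> (map_prod f g x, map_prod f g y) \<in> prod_order r' s'"
      using f(2) g(2) by (cases x; cases y) auto
  qed
qed

lemma iso_swap: "order_iso (S \<times> T) (prod_order r s) (T \<times> S) (prod_order s r)"
  by (rule isoI[of prod.swap]) (auto simp: bij_betw_def)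

lemma iso_assoc: "order_iso ((S \<times> T) \<times> U) (prod_order (prod_order r s) t) (S \<times> (T \<times> U)) (prod_order r (prod_order s t))"
proof (rule isoI[of "\<lambda>((a,b),c). (a,(b,c))"])
  show "bij_betw (\<lambda>((a,b),c). (a,(b,c))) ((S \<times> T) \<times> U) (S \<times> (T \<times> U))"
    by (rule bij_betwI') auto
qed auto

lemma iso_card: "order_iso S r T s \<Longrightarrow> card S = card T"
  unfolding order_iso_def using bij_betw_same_card by blast

lemma iso_finite: "order_iso S r T s \<Longrightarrow> finite S \<longleftrightarrow> finite T"
  unfolding order_iso_def using bij_betw_finite by blast

lemma iso_empty_iff: "order_iso S r T s \<Longrightarrow> S = {} \<longleftrightarrow> T = {}"
  unfolding order_iso_def bij_betw_def by blast

lemma iso_cong_right: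
  assumes "order_iso S r T s" "\<And>x y. x \<in> T \<Longrightarrow> y \<in> T \<Longrightarrow> (x,y) \<in> s \<longleftrightarrow> (x,y) \<in> s'"
  shows "order_iso S r T s'"
  using assms unfolding order_iso_def bij_betw_def by (metis image_eqI)

lemma iso_cong_left:
  assumes "order_iso S r T s" "\<And>x y. x \<in> S \<Longrightarrow> y \<in> S \<Longrightarrow> (x,y) \<in> r \<longleftrightarrow> (x,y) \<in> r'"
  shows "order_iso S r' T s"
  using assms unfolding order_iso_def by metis

lemma iso_restr_right: "order_iso S r T s \<Longrightarrow> order_iso S r T (s \<inter> T \<times> T)"
  by (rule iso_cong_right) auto

lemma iso_restr_right': "order_iso S r T (s \<inter> T \<times> T) \<Longrightarrow> order_iso S r T s"
  by (erule iso_cong_right) auto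

lemma iso_restr_left: "order_iso S r T s \<Longrightarrow> order_iso S (r \<inter> S \<times> S) T s"
  by (rule iso_cong_left) auto

lemma iso_restr_left': "order_iso S (r \<inter> S \<times> S) T s \<Longrightarrow> order_iso S r T s"
  by (erule iso_cong_left) auto

lemma iso_po:
  assumes "order_iso S r T s" "partial_order_on S r" "s \<subseteq> T \<times> T"
  shows "partial_order_on T s"
proof -
  have i: "order_iso T s S r" using iso_sym[OF assms(1)] .
  obtain g where g: "bij_betw g T S" "\<forall>x\<in>T. \<forall>y\<in>T. (x,y) \<in> s \<longleftrightarrow> (g x, g y) \<in> r"
    using i unfolding order_iso_def by blast
  have gT: "\<And>x. x \<in> T \<Longrightarrow> g x \<in> S" using g(1) by (auto simp: bij_betw_def)
  show ?thesis
  proof (rule po_intro)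
    show "s \<subseteq> T \<times> T" by fact
    show "\<And>x. x \<in> T \<Longrightarrow> (x, x) \<in> s" using g(2) gT po_refl[OF assms(2)] by blast
    show "\<And>x y z. (x, y) \<in> s \<Longrightarrow> (y, z) \<in> s \<Longrightarrow> (x, z) \<in> s"
    proof -
      fix x y z assume "(x, y) \<in> s" "(y, z) \<in> s"
      then have "x \<in> T" "y \<in> T" "z \<in> T" using assms(3) by auto
      then show "(x, z) \<in> s" using g(2) po_trans[OF assms(2)] \<open>(x, y) \<in> s\<close> \<open>(y, z) \<in> s\<close> by meson
    qed
    show "\<And>x y. (x, y) \<in> s \<Longrightarrow> (y, x) \<in> s \<Longrightarrow> x = y"
    proof -
      fix x y assume "(x, y) \<in> s" "(y, x) \<in> s"
      then have "x \<in> T" "y \<in> T" using assms(3) by auto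
      then have "g x = g y" using g(2) po_antisym[OF assms(2)] \<open>(x, y) \<in> s\<close> \<open>(y, x) \<in> s\<close> by meson
      then show "x = y" using g(1) \<open>x \<in> T\<close> \<open>y \<in> T\<close> by (auto simp: bij_betw_def inj_on_def)
    qed
  qed
qed

lemma path_map:
  assumes "(x,y) \<in> (\<rho> \<union> \<rho>\<inverse>)\<^sup>*" "\<And>u v. (u,v) \<in> \<rho> \<Longrightarrow> (\<phi> u, \<phi> v) \<in> \<sigma>"
  shows "(\<phi> x, \<phi> y) \<in> (\<sigma> \<union> \<sigma>\<inverse>)\<^sup>*"
  using assms(1)
proof (induction rule: rtrancl_induct)
  case base then show ?case by simp
next
  case (step y z)
  then have "(\<phi> y, \<phi> z) \<in> \<sigma> \<union> \<sigma>\<inverse>" using assms(2) by blast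
  then show ?case using step.IH by (rule rtrancl_into_rtrancl[rotated])
qed

lemma conn_iso:
  assumes "order_iso S r T s" "connected_poset S r" "r \<subseteq> S \<times> S"
  shows "connected_poset T s"
  unfolding connected_poset_def
proof (intro ballI)
  obtain f where f: "bij_betw f S T" "\<forall>x\<in>S. \<forall>y\<in>S. (x,y) \<in> r \<longleftrightarrow> (f x, f y) \<in> s"
    using assms(1) unfolding order_iso_def by blast
  fix x y assume "x \<in> T" "y \<in> T"
  then obtain a b where ab: "a \<in> S" "b \<in> S" "x = f a" "y = f b" using f(1) by (auto simp: bij_betw_def)
  have p: "(a,b) \<in> (r \<union> r\<inverse>)\<^sup>*" using assms(2) ab unfolding connected_poset_def by blast
  have "(f a, f b) \<in> (s \<union> s\<inverse>)\<^sup>*"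
  proof (rule path_map[OF p])
    fix u v assume "(u,v) \<in> r"
    moreover then have "u \<in> S" "v \<in> S" using assms(3) by auto
    ultimately show "(f u, f v) \<in> s" using f(2) by blast
  qed
  then show "(x, y) \<in> (s \<union> s\<inverse>)\<^sup>*" using ab by simp
qed

lemma conn_prod:
  assumes "connected_poset S r" "connected_poset T s" "partial_order_on S r" "partial_order_on T s"
  shows "connected_poset (S \<times> T) (prod_order r s)"
  unfolding connected_poset_def
proof (intro ballI)
  fix x y assume "x \<in> S \<times> T" "y \<in> S \<times> T"
  then obtain a b a' b' where xy: "x = (a,b)" "y = (a',b')" "a \<in> S" "b \<in> T" "a' \<in> S" "b' \<in> T" by auto
  have "(a,a') \<in> (r \<union> r\<inverse>)\<^sup>*" using assms(1) xy unfolding connected_poset_def by blast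
  moreover have "\<And>u v. (u,v) \<in> r \<Longrightarrow> ((u,b), (v,b)) \<in> prod_order r s"
    using po_refl[OF assms(4) \<open>b \<in> T\<close>] by simp
  ultimately have 1: "((\<lambda>u. (u,b)) a,(\<lambda>u. (u,b)) a') \<in> (prod_order r s \<union> (prod_order r s)\<inverse>)\<^sup>*"
    by (rule path_map)
  have "(b,b') \<in> (s \<union> s\<inverse>)\<^sup>*" using assms(2) xy unfolding connected_poset_def by blast
  moreover have "\<And>u v. (u,v) \<in> s \<Longrightarrow> ((a',u), (a',v)) \<in> prod_order r s"
    using po_refl[OF assms(3) \<open>a' \<in> S\<close>] by simp
  ultimately have 2: "((\<lambda>u. (a',u)) b,(\<lambda>u. (a',u)) b') \<in> (prod_order r s \<union> (prod_order r s)\<inverse>)\<^sup>*"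
    by (rule path_map)
  show "(x, y) \<in> (prod_order r s \<union> (prod_order r s)\<inverse>)\<^sup>*" using rtrancl_trans[OF 1 2] xy by simp
qed

lemma conn_factor1:
  assumes "connected_poset (S \<times> T) (prod_order r s)" "T \<noteq> {}"
  shows "connected_poset S r"
  unfolding connected_poset_def
proof (intro ballI)
  fix x y assume "x \<in> S" "y \<in> S"
  obtain t where "t \<in> T" using assms(2) by blast
  then have "((x,t),(y,t)) \<in> (prod_order r s \<union> (prod_order r s)\<inverse>)\<^sup>*"
    using assms(1) \<open>x \<in> S\<close> \<open>y \<in> S\<close> unfolding connected_poset_def by blast
  moreover have "\<And>u v. (u,v) \<in> prod_order r s \<Longrightarrow> (fst u, fst v) \<in> r" by (simp add: prod_order_mem)
  ultimately have "(fst (x,t), fst (y,t)) \<in> (r \<union> r\<inverse>)\<^sup>*" by (rule path_map)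
  then show "(x, y) \<in> (r \<union> r\<inverse>)\<^sup>*" by simp
qed

lemma conn_factor2:
  assumes "connected_poset (S \<times> T) (prod_order r s)" "S \<noteq> {}"
  shows "connected_poset T s"
  unfolding connected_poset_def
proof (intro ballI)
  fix x y assume "x \<in> T" "y \<in> T"
  obtain t where "t \<in> S" using assms(2) by blast
  then have "((t,x),(t,y)) \<in> (prod_order r s \<union> (prod_order r s)\<inverse>)\<^sup>*"
    using assms(1) \<open>x \<in> T\<close> \<open>y \<in> T\<close> unfolding connected_poset_def by blast
  moreover have "\<And>u v. (u,v) \<in> prod_order r s \<Longrightarrow> (snd u, snd v) \<in> s" by (simp add: prod_order_mem)
  ultimately have "(snd (t,x), snd (t,y)) \<in> (s \<union> s\<inverse>)\<^sup>*" by (rule path_map)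
  then show "(x, y) \<in> (s \<union> s\<inverse>)\<^sup>*" by simp
qed

lemma conn_restr_iff:
  assumes "r \<subseteq> S \<times> S"
  shows "connected_poset S (r \<inter> S \<times> S) \<longleftrightarrow> connected_poset S r"
  using assms by (simp add: Int_absorb2)

lemma natify:
  assumes "finite S"
  shows "\<exists>(N::nat set) n. order_iso S r N n \<and> n \<subseteq> N \<times> N"
proof -
  obtain e :: "'a \<Rightarrow> nat" and m where e: "e ` S = {i. i < m}" "inj_on e S"
    using finite_imp_inj_to_nat_seg[OF assms] by blast
  let ?N = "e ` S" and ?n = "map_prod e e ` (r \<inter> S \<times> S)"
  have "order_iso S r ?N ?n"
  proof (rule isoI[of e])
    show "bij_betw e S ?N" using e(2) by (simp add: bij_betw_def)
    fix x y assume xy: "x \<in> S" "y \<in> S"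
    show "(x, y) \<in> r \<longleftrightarrow> (e x, e y) \<in> ?n"
    proof
      assume "(x,y) \<in> r" then show "(e x, e y) \<in> ?n" using xy by force
    next
      assume "(e x, e y) \<in> ?n"
      then obtain a b where "(a,b) \<in> r" "a \<in> S" "b \<in> S" "e a = e x" "e b = e y" by auto
      then show "(x,y) \<in> r" using e(2) xy by (metis inj_onD)
    qed
  qed
  moreover have "?n \<subseteq> ?N \<times> ?N" by auto
  ultimately show ?thesis by blast
qed

lemma natify_po:
  assumes "finite S" "partial_order_on S r"
  shows "\<exists>(N::nat set) n. order_iso S r N n \<and> partial_order_on N n \<and> finite N"
proof -
  obtain N :: "nat set" and n where "order_iso S r N n" "n \<subseteq> N \<times> N" using natify[OF assms(1), of r] by blast
  then show ?thesis using iso_po[OF _ assms(2)] iso_finite assms(1) by blast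
qed

lemma unit_po: "partial_order_on {x} {(x,x)}"
  by (rule po_intro) auto

lemma card1_po: "card P = 1 \<Longrightarrow> partial_order_on P rP \<Longrightarrow> \<exists>p. P = {p} \<and> rP = {(p,p)}"
proof -
  assume a: "card P = 1" "partial_order_on P rP"
  obtain p where p: "P = {p}" using a(1) card_1_singletonE by blast
  have "rP \<subseteq> {(p,p)}" using po_sub[OF a(2)] p by auto
  moreover have "(p,p) \<in> rP" using po_refl[OF a(2)] p by auto
  ultimately show ?thesis using p by blast
qed

lemma iso_unit_left:
  assumes "card P = 1" "partial_order_on P rP"
  shows "order_iso (P \<times> S) (prod_order rP r) S r"
proof -
  obtain p where p: "P = {p}" "rP = {(p,p)}" using card1_po[OF assms] by blast
  show ?thesis
  proof (rule isoI[of snd])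
    show "bij_betw snd (P \<times> S) S" using p by (auto simp: bij_betw_def inj_on_def)
  qed (auto simp: p prod_order_mem)
qed

lemma iso_unit_right:
  assumes "card P = 1" "partial_order_on P rP"
  shows "order_iso (S \<times> P) (prod_order r rP) S r"
  using iso_trans[OF iso_swap iso_unit_left[OF assms]] .

lemma iso_card1:
  assumes "card S = 1" "partial_order_on S r" "card T = 1" "partial_order_on T s"
  shows "order_iso S r T s"
proof -
  obtain a where a: "S = {a}" "r = {(a,a)}" using card1_po[OF assms(1,2)] by blast
  obtain b where b: "T = {b}" "s = {(b,b)}" using card1_po[OF assms(3,4)] by blast
  show ?thesis by (rule isoI[of "\<lambda>_. b"]) (auto simp: a b bij_betw_def)
qed

lemma iso_empty: "order_iso {} r {} s"
  unfolding order_iso_def by (rule exI[of _ "\<lambda>_. undefined"]) (simp add: bij_betw_def)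

lemma slice_right:
  assumes "order_iso C rC (P \<times> C') (prod_order rP rC')" "partial_order_on P rP" "P \<noteq> {}"
  shows "\<exists>C''. C'' \<subseteq> C \<and> order_iso C rC (P \<times> C'') (prod_order rP rC)"
proof -
  obtain phi where phi: "bij_betw phi (P \<times> C') C"
    "\<forall>x\<in>P \<times> C'. \<forall>y\<in>P \<times> C'. (x,y) \<in> prod_order rP rC' \<longleftrightarrow> (phi x, phi y) \<in> rC"
    using iso_sym[OF assms(1)] unfolding order_iso_def by blast
  obtain e where e: "e \<in> P" using assms(3) by blast
  let ?C = "(\<lambda>c. phi (e,c)) ` C'"
  have sub: "?C \<subseteq> C"
  proof
    fix x assume "x \<in> ?C"
    then obtain c where "c \<in> C'" "x = phi (e,c)" by blast
    then show "x \<in> C" using phi(1) e unfolding bij_betw_def by blast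
  qed
  have "order_iso C' rC' ?C rC"
  proof (rule isoI)
    have "inj_on phi (P \<times> C')" using phi(1) by (simp add: bij_betw_def)
    then have "inj_on (\<lambda>c. phi (e,c)) C'" using e unfolding inj_on_def by blast
    then show "bij_betw (\<lambda>c. phi (e,c)) C' ?C" by (simp add: bij_betw_def)
    fix x y assume "x \<in> C'" "y \<in> C'"
    then show "(x, y) \<in> rC' \<longleftrightarrow> (phi (e, x), phi (e, y)) \<in> rC"
    proof -
      have "(x,y) \<in> rC' \<longleftrightarrow> ((e,x),(e,y)) \<in> prod_order rP rC'" using po_refl[OF assms(2) e] by simp
      also have "\<dots> \<longleftrightarrow> (phi (e, x), phi (e, y)) \<in> rC" using phi(2) e \<open>x \<in> C'\<close> \<open>y \<in> C'\<close> by blast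
      finally show ?thesis .
    qed
  qed
  then have "order_iso (P \<times> C') (prod_order rP rC') (P \<times> ?C) (prod_order rP rC)"
    by (rule iso_prod[OF iso_refl])
  then have "order_iso C rC (P \<times> ?C) (prod_order rP rC)" by (rule iso_trans[OF assms(1)])
  then show ?thesis using sub by blast
qed

lemma slice_left:
  assumes "order_iso C rC (C' \<times> P) (prod_order rC' rP)" "partial_order_on P rP" "P \<noteq> {}"
  shows "\<exists>C''. C'' \<subseteq> C \<and> order_iso C rC (C'' \<times> P) (prod_order rC rP)"
proof -
  obtain C'' where c: "C'' \<subseteq> C" "order_iso C rC (P \<times> C'') (prod_order rP rC)"
    using slice_right[OF iso_trans[OF assms(1) iso_swap] assms(2,3)] by blast
  have "order_iso C rC (C'' \<times> P) (prod_order rC rP)" by (rule iso_trans[OF c(2) iso_swap])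
  then show ?thesis using c(1) by blast
qed

locale piso =
  fixes Q :: "'q set" and rQ and R :: "'r set" and rR and S :: "'s set" and rS
    and T :: "'t set" and rT and f :: "'q \<times> 'r \<Rightarrow> 's \<times> 't"
  assumes pQ: "partial_order_on Q rQ" and pR: "partial_order_on R rR"
    and pS: "partial_order_on S rS" and pT: "partial_order_on T rT"
    and cQ: "connected_poset Q rQ" and cR: "connected_poset R rR"
    and neQ: "Q \<noteq> {}" and neR: "R \<noteq> {}"
    and fbij: "bij_betw f (Q \<times> R) (S \<times> T)"
    and ford: "\<And>x y. x \<in> Q \<times> R \<Longrightarrow> y \<in> Q \<times> R \<Longrightarrow> (x,y) \<in> prod_order rQ rR \<longleftrightarrow> (f x, f y) \<in> prod_order rS rT"
begin

lemma swapQR: "piso R rR Q rQ S rS T rT (\<lambda>(r,q). f (q,r))"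
proof (unfold_locales)
  show "bij_betw (\<lambda>(r, q). f (q, r)) (R \<times> Q) (S \<times> T)"
  proof -
    have "bij_betw prod.swap (R \<times> Q) (Q \<times> R)" by (auto simp: bij_betw_def)
    then have "bij_betw (f \<circ> prod.swap) (R \<times> Q) (S \<times> T)" using fbij by (rule bij_betw_trans)
    moreover have "f \<circ> prod.swap = (\<lambda>(r, q). f (q, r))" by auto
    ultimately show ?thesis by simp
  qed
  fix x y assume "x \<in> R \<times> Q" "y \<in> R \<times> Q"
  then show "(x, y) \<in> prod_order rR rQ \<longleftrightarrow> ((case x of (r, q) \<Rightarrow> f (q, r)), (case y of (r, q) \<Rightarrow> f (q, r))) \<in> prod_order rS rT"
    using ford[of "(snd x, fst x)" "(snd y, fst y)"] by (cases x; cases y) auto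
qed (fact pQ pR pS pT cQ cR neQ neR)+

lemma swapST: "piso Q rQ R rR T rT S rS (\<lambda>x. prod.swap (f x))"
proof (unfold_locales)
  show "bij_betw (\<lambda>x. prod.swap (f x)) (Q \<times> R) (T \<times> S)"
  proof -
    have "bij_betw prod.swap (S \<times> T) (T \<times> S)" by (auto simp: bij_betw_def)
    then have "bij_betw (prod.swap \<circ> f) (Q \<times> R) (T \<times> S)" using fbij by (rule bij_betw_trans[rotated])
    then show ?thesis by (simp add: comp_def)
  qed
  fix x y assume "x \<in> Q \<times> R" "y \<in> Q \<times> R"
  then show "(x, y) \<in> prod_order rQ rR \<longleftrightarrow> (prod.swap (f x), prod.swap (f y)) \<in> prod_order rT rS"
    using ford by (auto simp: prod_order_mem)
qed (fact pQ pR pS pT cQ cR neQ neR)+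

definition g where "g q r = fst (f (q,r))"
definition h where "h q r = snd (f (q,r))"
definition finv where "finv = inv_into (Q \<times> R) f"

lemma f_gh: "f (q,r) = (g q r, h q r)"
  by (simp add: g_def h_def)

lemma fin: "q \<in> Q \<Longrightarrow> r \<in> R \<Longrightarrow> f (q,r) \<in> S \<times> T"
  using fbij by (auto simp: bij_betw_def)

lemma g_in: "q \<in> Q \<Longrightarrow> r \<in> R \<Longrightarrow> g q r \<in> S"
  using fin by (auto simp: g_def mem_Times_iff)

lemma h_in: "q \<in> Q \<Longrightarrow> r \<in> R \<Longrightarrow> h q r \<in> T"
  using fin by (auto simp: h_def mem_Times_iff)

lemma ord2:
  assumes "q \<in> Q" "q' \<in> Q" "r \<in> R" "r' \<in> R"
  shows "((q,q') \<in> rQ \<and> (r,r') \<in> rR) \<longleftrightarrow> ((g q r, g q' r') \<in> rS \<and> (h q r, h q' r') \<in> rT)"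
  using ford[of "(q,r)" "(q',r')"] assms by (simp add: f_gh)

lemma finv:
  assumes "s \<in> S" "t \<in> T"
  shows "finv (s,t) \<in> Q \<times> R" "f (finv (s,t)) = (s,t)"
proof -
  have "(s,t) \<in> f ` (Q \<times> R)" using fbij assms by (auto simp: bij_betw_def)
  then show "finv (s,t) \<in> Q \<times> R" "f (finv (s,t)) = (s,t)"
    unfolding finv_def by (auto intro: inv_into_into f_inv_into_f)
qed

lemma finv_f: "q \<in> Q \<Longrightarrow> r \<in> R \<Longrightarrow> finv (g q r, h q r) = (q,r)"
  unfolding finv_def using fbij by (metis bij_betw_def f_gh inv_into_f_f mem_Sigma_iff)

lemma finj:
  assumes "q \<in> Q" "q' \<in> Q" "r \<in> R" "r' \<in> R" "g q r = g q' r'" "h q r = h q' r'"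
  shows "q = q' \<and> r = r'"
proof -
  have "f (q,r) = f (q',r')" using assms by (simp add: f_gh)
  then show ?thesis using fbij assms unfolding bij_betw_def inj_on_def by blast
qed

lemma get_pre:
  assumes "s \<in> S" "t \<in> T"
  obtains a b where "a \<in> Q" "b \<in> R" "g a b = s" "h a b = t"
proof -
  obtain a b where "finv (s,t) = (a,b)" by (cases "finv (s,t)")
  then show ?thesis using finv[OF assms] that by (auto simp: f_gh)
qed

lemma L1:
  assumes q: "q \<in> Q" "q' \<in> Q" and r: "r \<in> R" "r'' \<in> R"
    and le: "(q,q') \<in> rQ" "(r,r'') \<in> rR" and eq: "g q r = g q' r"
  shows "g q r'' = g q' r''"
proof -
  have rq: "(q,q) \<in> rQ" "(q',q') \<in> rQ" using po_refl[OF pQ] q by auto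
  have rr: "(r'',r'') \<in> rR" "(r,r) \<in> rR" using po_refl[OF pR] r by auto
  have a1: "(g q r, g q r'') \<in> rS" using ord2[of q q r r''] q r rq le by blast
  have a2: "(g q' r, g q' r'') \<in> rS" "(h q' r, h q' r'') \<in> rT" using ord2[of q' q' r r''] q r rq le by auto
  have a3: "(g q r'', g q' r'') \<in> rS" "(h q r'', h q' r'') \<in> rT" using ord2[of q q' r'' r''] q r rr le by auto
  obtain a b where ab: "a \<in> Q" "b \<in> R" "g a b = g q r''" "h a b = h q' r''"
    using get_pre[OF g_in h_in] q r by metis
  have "(q',a) \<in> rQ \<and> (r,b) \<in> rR" using ord2[of q' a r b] ab q r a1 a2 eq by auto
  moreover have "(a,q') \<in> rQ \<and> (b,r'') \<in> rR"
    using ord2[of a q' b r''] ab q r a3 po_refl[OF pT h_in[of q' r'']] by auto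
  moreover have "(r'',b) \<in> rR"
    using ord2[of q a r'' b] ab q r a3 po_refl[OF pS g_in[of q r'']] by auto
  ultimately have "a = q'" "b = r''" using po_antisym[OF pQ] po_antisym[OF pR] by auto
  then show ?thesis using ab by simp
qed

lemma L2:
  assumes q: "q \<in> Q" "q' \<in> Q" and r: "r \<in> R" "r'' \<in> R"
    and le: "(q,q') \<in> rQ" "(r'',r) \<in> rR" and eq: "g q r = g q' r"
  shows "g q r'' = g q' r''"
proof -
  have rq: "(q,q) \<in> rQ" "(q',q') \<in> rQ" using po_refl[OF pQ] q by auto
  have rr: "(r'',r'') \<in> rR" "(r,r) \<in> rR" using po_refl[OF pR] r by auto
  have a1: "(g q r'', g q r) \<in> rS" "(h q r'', h q r) \<in> rT" using ord2[of q q r'' r] q r rq le by auto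
  have a2: "(g q' r'', g q' r) \<in> rS" using ord2[of q' q' r'' r] q r rq le by auto
  have a3: "(g q r'', g q' r'') \<in> rS" "(h q r'', h q' r'') \<in> rT" using ord2[of q q' r'' r''] q r rr le by auto
  obtain a b where ab: "a \<in> Q" "b \<in> R" "g a b = g q' r''" "h a b = h q r''"
    using get_pre[OF g_in h_in] q r by metis
  have "(q,a) \<in> rQ \<and> (r'',b) \<in> rR"
    using ord2[of q a r'' b] ab q r a3 po_refl[OF pT h_in[of q r'']] by auto
  moreover have "(a,q) \<in> rQ \<and> (b,r) \<in> rR" using ord2[of a q b r] ab q r a1 a2 eq by auto
  moreover have "(b,r'') \<in> rR"
    using ord2[of a q' b r''] ab q r a3 po_refl[OF pS g_in[of q' r'']] by auto
  ultimately have "a = q" "b = r''" using po_antisym[OF pQ] po_antisym[OF pR] by auto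
  then show ?thesis using ab by simp
qed

definition eqQ where "eqQ q q' \<longleftrightarrow> (\<forall>r\<in>R. g q r = g q' r)"
definition eqR where "eqR r r' \<longleftrightarrow> (\<forall>q\<in>Q. g q r = g q r')"

lemma stepA:
  assumes q: "q \<in> Q" "q' \<in> Q" and r: "r \<in> R" and le: "(q,q') \<in> rQ" and eq: "g q r = g q' r"
  shows "eqQ q q'"
  unfolding eqQ_def
proof
  fix r'' assume "r'' \<in> R"
  then have "(r,r'') \<in> (rR \<union> rR\<inverse>)\<^sup>*" using cR r unfolding connected_poset_def by blast
  then have "r'' \<in> R \<and> g q r'' = g q' r''"
  proof (induction rule: rtrancl_induct)
    case base then show ?case using r eq by simp
  next
    case (step y z)
    then have yz: "y \<in> R" "z \<in> R" using po_sub[OF pR] by auto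
    show ?case
    proof (cases "(y,z) \<in> rR")
      case True then show ?thesis using L1[OF q yz le True] step yz by blast
    next
      case False then have "(z,y) \<in> rR" using step by blast
      then show ?thesis using L2[OF q yz le] step yz by blast
    qed
  qed
  then show "g q r'' = g q' r''" by blast
qed


lemma stepA':
  assumes q: "q \<in> Q" and r: "r \<in> R" "r' \<in> R" and le: "(r,r') \<in> rR" and eq: "g q r = g q r'"
  shows "eqR r r'"
proof -
  interpret sw: piso R rR Q rQ S rS T rT "\<lambda>(r,q). f (q,r)" by (rule swapQR)
  have sg: "\<And>r q. sw.g r q = g q r" by (simp add: sw.g_def g_def)
  have "sw.eqQ r r'" using sw.stepA[OF r q le] eq by (simp add: sg)
  then show ?thesis unfolding sw.eqQ_def eqR_def sg .
qed

lemma stepB: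
  assumes "a \<in> Q" "a' \<in> Q" "b \<in> R" "b' \<in> R" "(a,a') \<in> rQ" "(b,b') \<in> rR" "g a b = g a' b'"
  shows "eqQ a a' \<and> eqR b b'"
proof -
  have "(g a b, g a' b) \<in> rS" using ord2[of a a' b b] assms po_refl[OF pR] by blast
  moreover have "(g a' b, g a' b') \<in> rS" using ord2[of a' a' b b'] assms po_refl[OF pQ] by blast
  ultimately have e: "g a' b = g a b" using assms(7) po_antisym[OF pS] by metis
  show ?thesis using stepA[of a a' b] stepA'[of a' b b'] assms e by auto
qed

lemma eqQ_refl: "eqQ q q" and eqQ_sym: "eqQ q q' \<Longrightarrow> eqQ q' q"
  and eqQ_trans: "eqQ q q' \<Longrightarrow> eqQ q' q'' \<Longrightarrow> eqQ q q''"
  by (auto simp: eqQ_def)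

lemma eqR_refl: "eqR r r" and eqR_sym: "eqR r r' \<Longrightarrow> eqR r' r"
  and eqR_trans: "eqR r r' \<Longrightarrow> eqR r' r'' \<Longrightarrow> eqR r r''"
  by (auto simp: eqR_def)

lemma P_conn: "connected_poset (Q \<times> R) (prod_order rQ rR)"
  by (rule conn_prod[OF cQ cR pQ pR])

lemma ST_conn: "connected_poset (S \<times> T) (prod_order rS rT)"
proof (rule conn_iso[OF _ P_conn])
  show "order_iso (Q \<times> R) (prod_order rQ rR) (S \<times> T) (prod_order rS rT)"
    using fbij ford unfolding order_iso_def by blast
  show "prod_order rQ rR \<subseteq> (Q \<times> R) \<times> Q \<times> R" by (rule prod_order_sub[OF pQ pR])
qed

lemma S_ne: "S \<noteq> {}" and T_ne: "T \<noteq> {}"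
proof -
  obtain q r where "q \<in> Q" "r \<in> R" using neQ neR by blast
  then show "S \<noteq> {}" "T \<noteq> {}" using g_in h_in by blast+
qed

lemma T_conn: "connected_poset T rT"
  by (rule conn_factor2[OF ST_conn S_ne])

lemma K:
  assumes q: "q \<in> Q" "q' \<in> Q" and r: "r \<in> R" "r' \<in> R" and eq: "g q r = g q' r'"
  shows "eqQ q q' \<and> eqR r r'"
proof -
  let ?s = "g q r"
  have sS: "?s \<in> S" using g_in q r by blast
  have "(h q r, h q' r') \<in> (rT \<union> rT\<inverse>)\<^sup>*" using T_conn h_in q r unfolding connected_poset_def by blast
  then have "h q' r' \<in> T \<and> eqQ q (fst (finv (?s, h q' r'))) \<and> eqR r (snd (finv (?s, h q' r')))"
  proof (induction rule: rtrancl_induct)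
    case base then show ?case using finv_f[OF q(1) r(1)] h_in q r by (simp add: eqQ_refl eqR_refl)
  next
    case (step y z)
    have yz: "y \<in> T" "z \<in> T" using step po_sub[OF pT] by auto
    obtain a b where ab: "finv (?s,y) = (a,b)" by (cases "finv (?s,y)")
    obtain a' b' where ab': "finv (?s,z) = (a',b')" by (cases "finv (?s,z)")
    have A: "a \<in> Q" "b \<in> R" "g a b = ?s" "h a b = y" using finv[OF sS yz(1)] ab by (auto simp: f_gh)
    have B: "a' \<in> Q" "b' \<in> R" "g a' b' = ?s" "h a' b' = z" using finv[OF sS yz(2)] ab' by (auto simp: f_gh)
    have ss: "(?s,?s) \<in> rS" using po_refl[OF pS sS] .
    have "eqQ a a' \<and> eqR b b'"
    proof (cases "(y,z) \<in> rT")
      case True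
      then have "(a,a') \<in> rQ \<and> (b,b') \<in> rR" using ord2[of a a' b b'] A B ss by auto
      then show ?thesis using stepB[of a a' b b'] A B by auto
    next
      case False then have "(z,y) \<in> rT" using step by blast
      then have "(a',a) \<in> rQ \<and> (b',b) \<in> rR" using ord2[of a' a b' b] A B ss by auto
      then show ?thesis using stepB[of a' a b' b] A B eqQ_sym eqR_sym by auto
    qed
    then show ?case using step.IH ab ab' yz eqQ_trans eqR_trans by auto
  qed
  moreover have "finv (?s, h q' r') = (q',r')" using finv_f[OF q(2) r(2)] eq by simp
  ultimately show ?thesis by simp
qed

lemma K_rev: "q \<in> Q \<Longrightarrow> q' \<in> Q \<Longrightarrow> r \<in> R \<Longrightarrow> r' \<in> R \<Longrightarrow> eqQ q q' \<Longrightarrow> eqR r r' \<Longrightarrow> g q r = g q' r'"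
  by (simp add: eqQ_def eqR_def)


lemma Kh:
  assumes q: "q \<in> Q" "q' \<in> Q" and r: "r \<in> R" "r' \<in> R" and eq: "h q r = h q' r'"
  shows "(\<forall>r''\<in>R. h q r'' = h q' r'') \<and> (\<forall>q''\<in>Q. h q'' r = h q'' r')"
proof -
  interpret sw: piso Q rQ R rR T rT S rS "\<lambda>x. prod.swap (f x)" by (rule swapST)
  have sg: "\<And>q r. sw.g q r = h q r" by (simp add: sw.g_def h_def)
  have "sw.eqQ q q' \<and> sw.eqR r r'" using sw.K[OF q r] eq by (simp add: sg)
  then show ?thesis unfolding sw.eqQ_def sw.eqR_def sg .
qed

lemma layer_iso:
  assumes r0: "r0 \<in> R"
  shows "order_iso Q rQ ((\<lambda>q. g q r0) ` Q \<times> (\<lambda>q. h q r0) ` Q) (prod_order rS rT)"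
proof (rule isoI[of "\<lambda>q. f (q,r0)"])
  show "bij_betw (\<lambda>q. f (q, r0)) Q ((\<lambda>q. g q r0) ` Q \<times> (\<lambda>q. h q r0) ` Q)"
  proof (rule bij_betwI')
    fix x y assume "x \<in> Q" "y \<in> Q"
    then show "(f (x, r0) = f (y, r0)) = (x = y)" using finj[of x y r0 r0] r0 by (auto simp: f_gh)
  next
    fix x assume "x \<in> Q" then show "f (x, r0) \<in> (\<lambda>q. g q r0) ` Q \<times> (\<lambda>q. h q r0) ` Q"
      by (simp add: f_gh)
  next
    fix y assume "y \<in> (\<lambda>q. g q r0) ` Q \<times> (\<lambda>q. h q r0) ` Q"
    then obtain q q' where qq: "q \<in> Q" "q' \<in> Q" "y = (g q r0, h q' r0)" by auto
    obtain a b where ab: "a \<in> Q" "b \<in> R" "g a b = g q r0" "h a b = h q' r0"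
      using get_pre[OF g_in h_in] qq r0 by metis
    have "eqQ a q" using K[of a q b r0] ab qq r0 by blast
    then have 1: "g a r0 = g q r0" using r0 unfolding eqQ_def by blast
    have 2: "h a r0 = h q' r0" using Kh[of a q' b r0] ab qq r0 by blast
    have "y = f (a, r0)" using 1 2 qq by (simp add: f_gh)
    then show "\<exists>x\<in>Q. y = f (x, r0)" using ab(1) by blast
  qed
next
  fix x y assume "x \<in> Q" "y \<in> Q"
  then show "(x, y) \<in> rQ \<longleftrightarrow> (f (x, r0), f (y, r0)) \<in> prod_order rS rT"
    using ford[of "(x,r0)" "(y,r0)"] r0 po_refl[OF pR r0] by simp
qed

lemma S_iso:
  assumes q0: "q0 \<in> Q" and r0: "r0 \<in> R"
  shows "order_iso S rS ((\<lambda>q. g q r0) ` Q \<times> (\<lambda>r. g q0 r) ` R) (prod_order rS rS)"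
proof -
  define t0 where "t0 = h q0 r0"
  have t0: "t0 \<in> T" using h_in q0 r0 t0_def by simp
  define psi where "psi s = (g (fst (finv (s,t0))) r0, g q0 (snd (finv (s,t0))))" for s
  have pre: "\<And>s. s \<in> S \<Longrightarrow> fst (finv (s,t0)) \<in> Q \<and> snd (finv (s,t0)) \<in> R \<and>
      g (fst (finv (s,t0))) (snd (finv (s,t0))) = s \<and> h (fst (finv (s,t0))) (snd (finv (s,t0))) = t0"
    using finv t0 by (metis f_gh mem_Times_iff prod.collapse prod.inject)
  show ?thesis
  proof (rule isoI[of psi])
    show "bij_betw psi S ((\<lambda>q. g q r0) ` Q \<times> (\<lambda>r. g q0 r) ` R)"
    proof (rule bij_betwI')
      fix x y assume xy: "x \<in> S" "y \<in> S"
      show "(psi x = psi y) = (x = y)"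
      proof
        assume e: "psi x = psi y"
        let ?a = "fst (finv (x,t0))" and ?b = "snd (finv (x,t0))"
        let ?a' = "fst (finv (y,t0))" and ?b' = "snd (finv (y,t0))"
        have "eqQ ?a ?a'" using K[of ?a ?a' r0 r0] e pre xy r0 unfolding psi_def by auto
        moreover have "eqR ?b ?b'" using K[of q0 q0 ?b ?b'] e pre xy q0 unfolding psi_def by auto
        ultimately have "g ?a ?b = g ?a' ?b'" using K_rev pre xy by blast
        then show "x = y" using pre xy by metis
      qed simp
    next
      fix x assume "x \<in> S" then show "psi x \<in> (\<lambda>q. g q r0) ` Q \<times> (\<lambda>r. g q0 r) ` R"
        using pre unfolding psi_def by auto
    next
      fix y assume "y \<in> (\<lambda>q. g q r0) ` Q \<times> (\<lambda>r. g q0 r) ` R"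
      then obtain q r where qr: "q \<in> Q" "r \<in> R" "y = (g q r0, g q0 r)" by auto
      let ?s = "g q r"
      have sS: "?s \<in> S" using g_in qr by blast
      let ?a = "fst (finv (?s,t0))" and ?b = "snd (finv (?s,t0))"
      have "eqQ ?a q \<and> eqR ?b r" using K[of ?a q ?b r] pre[OF sS] qr by auto
      then have "psi ?s = y" using qr q0 r0 unfolding psi_def eqQ_def eqR_def by auto
      then show "\<exists>x\<in>S. y = psi x" using sS by metis
    qed
  next
    fix x y assume xy: "x \<in> S" "y \<in> S"
    let ?a = "fst (finv (x,t0))" and ?b = "snd (finv (x,t0))"
    let ?a' = "fst (finv (y,t0))" and ?b' = "snd (finv (y,t0))"
    have P: "?a \<in> Q" "?b \<in> R" "g ?a ?b = x" "h ?a ?b = t0" using pre[OF xy(1)] by auto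
    have P': "?a' \<in> Q" "?b' \<in> R" "g ?a' ?b' = y" "h ?a' ?b' = t0" using pre[OF xy(2)] by auto
    have hh: "(\<forall>r''\<in>R. h ?a r'' = h ?a' r'') \<and> (\<forall>q''\<in>Q. h q'' ?b = h q'' ?b')"
      using Kh[of ?a ?a' ?b ?b'] P P' by auto
    have tt: "(t0,t0) \<in> rT" using po_refl[OF pT t0] .
    have "(x,y) \<in> rS \<longleftrightarrow> (?a,?a') \<in> rQ \<and> (?b,?b') \<in> rR"
      using ord2[of ?a ?a' ?b ?b'] P P' tt by auto
    moreover have "(g ?a r0, g ?a' r0) \<in> rS \<longleftrightarrow> (?a,?a') \<in> rQ"
      using ord2[of ?a ?a' r0 r0] P P' r0 hh po_refl[OF pR r0] po_refl[OF pT h_in[OF P'(1) r0]] by auto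
    moreover have "(g q0 ?b, g q0 ?b') \<in> rS \<longleftrightarrow> (?b,?b') \<in> rR"
      using ord2[of q0 q0 ?b ?b'] P P' q0 hh po_refl[OF pQ q0] po_refl[OF pT h_in[OF q0 P'(2)]] by auto
    ultimately show "(x, y) \<in> rS \<longleftrightarrow> (psi x, psi y) \<in> prod_order rS rS"
      unfolding psi_def by simp
  qed
qed

end

theorem CR:
  assumes pQ: "partial_order_on Q rQ" and pR: "partial_order_on R rR"
    and pS: "partial_order_on S rS" and pT: "partial_order_on T rT"
    and cQ: "connected_poset Q rQ" and cR: "connected_poset R rR"
    and neQ: "Q \<noteq> {}" and neR: "R \<noteq> {}"
    and iso: "order_iso (Q \<times> R) (prod_order rQ rR) (S \<times> T) (prod_order rS rT)"
  shows "\<exists>Q1 Q2 R1 R2. Q1 \<subseteq> S \<and> Q2 \<subseteq> T \<and> R1 \<subseteq> S \<and> R2 \<subseteq> T \<and>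
     order_iso Q rQ (Q1 \<times> Q2) (prod_order rS rT) \<and> order_iso R rR (R1 \<times> R2) (prod_order rS rT) \<and>
     order_iso S rS (Q1 \<times> R1) (prod_order rS rS) \<and> order_iso T rT (Q2 \<times> R2) (prod_order rT rT)"
proof -
  obtain f where f: "bij_betw f (Q \<times> R) (S \<times> T)"
    "\<forall>x\<in>Q \<times> R. \<forall>y\<in>Q \<times> R. (x,y) \<in> prod_order rQ rR \<longleftrightarrow> (f x, f y) \<in> prod_order rS rT"
    using iso unfolding order_iso_def by blast
  interpret p: piso Q rQ R rR S rS T rT f using assms f by unfold_locales auto
  interpret sw: piso R rR Q rQ S rS T rT "\<lambda>(r,q). f (q,r)" by (rule p.swapQR)
  interpret sw2: piso Q rQ R rR T rT S rS "\<lambda>x. prod.swap (f x)" by (rule p.swapST)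
  have sg: "\<And>r q. sw.g r q = p.g q r" by (simp add: sw.g_def p.g_def)
  have sh: "\<And>r q. sw.h r q = p.h q r" by (simp add: sw.h_def p.h_def)
  have s2g: "\<And>q r. sw2.g q r = p.h q r" by (simp add: sw2.g_def p.h_def)
  obtain q0 r0 where q0: "q0 \<in> Q" and r0: "r0 \<in> R" using neQ neR by blast
  let ?Q1 = "(\<lambda>q. p.g q r0) ` Q" and ?Q2 = "(\<lambda>q. p.h q r0) ` Q"
  let ?R1 = "(\<lambda>r. p.g q0 r) ` R" and ?R2 = "(\<lambda>r. p.h q0 r) ` R"
  have 1: "order_iso Q rQ (?Q1 \<times> ?Q2) (prod_order rS rT)" by (rule p.layer_iso[OF r0])
  have 2: "order_iso R rR (?R1 \<times> ?R2) (prod_order rS rT)" using sw.layer_iso[OF q0] by (simp add: sg sh)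
  have 3: "order_iso S rS (?Q1 \<times> ?R1) (prod_order rS rS)" by (rule p.S_iso[OF q0 r0])
  have 4: "order_iso T rT (?Q2 \<times> ?R2) (prod_order rT rT)" using sw2.S_iso[OF q0 r0] by (simp add: s2g)
  have 5: "?Q1 \<subseteq> S" "?R1 \<subseteq> S" using p.g_in q0 r0 by auto
  have 6: "?Q2 \<subseteq> T" "?R2 \<subseteq> T" using p.h_in q0 r0 by auto
  show ?thesis using 1 2 3 4 5 6 by blast
qed

definition cpo :: "'a set \<Rightarrow> 'a rel \<Rightarrow> bool" where
  "cpo S r \<longleftrightarrow> partial_order_on S r \<and> finite S \<and> connected_poset S r \<and> S \<noteq> {}"

lemma iso_prod_restr:
  "order_iso M m (A \<times> B) (prod_order r s) \<longleftrightarrow> order_iso M m (A \<times> B) (prod_order (r \<inter> A \<times> A) (s \<inter> B \<times> B))"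
proof
  assume "order_iso M m (A \<times> B) (prod_order r s)"
  then show "order_iso M m (A \<times> B) (prod_order (r \<inter> A \<times> A) (s \<inter> B \<times> B))"
    by (rule iso_cong_right) (auto simp: prod_order_mem)
next
  assume "order_iso M m (A \<times> B) (prod_order (r \<inter> A \<times> A) (s \<inter> B \<times> B))"
  then show "order_iso M m (A \<times> B) (prod_order r s)"
    by (rule iso_cong_right) (auto simp: prod_order_mem)
qed

lemma iso_prod_restr_left:
  "order_iso (A \<times> B) (prod_order r s) M m \<longleftrightarrow> order_iso (A \<times> B) (prod_order (r \<inter> A \<times> A) (s \<inter> B \<times> B)) M m"
proof
  assume "order_iso (A \<times> B) (prod_order r s) M m"
  then have "order_iso M m (A \<times> B) (prod_order r s)" by (rule iso_sym)
  then have "order_iso M m (A \<times> B) (prod_order (r \<inter> A \<times> A) (s \<inter> B \<times> B))" using iso_prod_restr by blast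
  then show "order_iso (A \<times> B) (prod_order (r \<inter> A \<times> A) (s \<inter> B \<times> B)) M m" by (rule iso_sym)
next
  assume "order_iso (A \<times> B) (prod_order (r \<inter> A \<times> A) (s \<inter> B \<times> B)) M m"
  then have "order_iso M m (A \<times> B) (prod_order (r \<inter> A \<times> A) (s \<inter> B \<times> B))" by (rule iso_sym)
  then have "order_iso M m (A \<times> B) (prod_order r s)" using iso_prod_restr by blast
  then show "order_iso (A \<times> B) (prod_order r s) M m" by (rule iso_sym)
qed

lemma iso_restr_iff: "order_iso S r T s \<longleftrightarrow> order_iso S (r \<inter> S \<times> S) T s"
  using iso_restr_left iso_restr_left' by blast

lemma iso_restr_iff2: "order_iso S r T s \<longleftrightarrow> order_iso S r T (s \<inter> T \<times> T)"
  using iso_restr_right iso_restr_right' by blast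

lemma cpo_iso:
  assumes "cpo S r" "order_iso S r T s" "s \<subseteq> T \<times> T"
  shows "cpo T s"
proof -
  have a: "partial_order_on S r" "finite S" "connected_poset S r" "S \<noteq> {}" using assms(1) unfolding cpo_def by auto
  have "partial_order_on T s" using iso_po[OF assms(2) a(1) assms(3)] .
  moreover have "connected_poset T s" using conn_iso[OF assms(2) a(3) po_sub[OF a(1)]] .
  moreover have "finite T" using iso_finite[OF assms(2)] a(2) by blast
  moreover have "T \<noteq> {}" using iso_empty_iff[OF assms(2)] a(4) by blast
  ultimately show ?thesis unfolding cpo_def by blast
qed

lemma cpo_prod:
  assumes "cpo S r" "cpo T s" shows "cpo (S \<times> T) (prod_order r s)"
proof -
  have a: "partial_order_on S r" "finite S" "connected_poset S r" "S \<noteq> {}" using assms(1) unfolding cpo_def by auto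
  have b: "partial_order_on T s" "finite T" "connected_poset T s" "T \<noteq> {}" using assms(2) unfolding cpo_def by auto
  show ?thesis unfolding cpo_def using po_prod[OF a(1) b(1)] conn_prod[OF a(3) b(3) a(1) b(1)] a b by auto
qed

lemma cpo_factor:
  assumes "cpo M m" "order_iso M m (S \<times> T) (prod_order r s)" "partial_order_on S r" "partial_order_on T s"
  shows "cpo S r" "cpo T s"
proof -
  have c: "cpo (S \<times> T) (prod_order r s)" using cpo_iso[OF assms(1,2) prod_order_sub[OF assms(3,4)]] .
  then have ne: "S \<noteq> {}" "T \<noteq> {}" and fin: "finite (S \<times> T)" unfolding cpo_def by auto
  have "finite S" using fin ne finite_cartesian_productD1 by blast
  moreover have "finite T" using fin ne finite_cartesian_productD2 by blast
  moreover have "connected_poset S r" using conn_factor1 c ne unfolding cpo_def by blast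
  moreover have "connected_poset T s" using conn_factor2 c ne unfolding cpo_def by blast
  ultimately show "cpo S r" "cpo T s" using assms(3,4) ne unfolding cpo_def by auto
qed

lemma cpo_natify:
  assumes "cpo S r" shows "\<exists>(N::nat set) n. cpo N n \<and> order_iso S r N n"
proof -
  obtain N :: "nat set" and n where "order_iso S r N n" "n \<subseteq> N \<times> N"
    using natify assms unfolding cpo_def by blast
  then show ?thesis using cpo_iso[OF assms] by blast
qed

lemma po_natify:
  assumes "partial_order_on S r" "finite S" shows "\<exists>(N::nat set) n. partial_order_on N n \<and> finite N \<and> order_iso S r N n"
  using natify_po[OF assms(2,1)] by blast

lemma cpo_card_pos: "cpo S r \<Longrightarrow> card S > 0"
  unfolding cpo_def by auto

lemma card1_iso_unit: "card P = 1 \<Longrightarrow> partial_order_on P rP \<Longrightarrow> order_iso P rP ({0::nat}) {(0,0)}"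
  using iso_card1[OF _ _ _ unit_po] by simp

lemma CR':
  assumes "cpo Q rQ" "cpo R rR" "partial_order_on S rS" "partial_order_on T rT"
    and iso: "order_iso (Q \<times> R) (prod_order rQ rR) (S \<times> T) (prod_order rS rT)"
  shows "\<exists>Q1 Q2 R1 R2. Q1 \<subseteq> S \<and> Q2 \<subseteq> T \<and> R1 \<subseteq> S \<and> R2 \<subseteq> T \<and>
     partial_order_on Q1 (rS \<inter> Q1 \<times> Q1) \<and> partial_order_on Q2 (rT \<inter> Q2 \<times> Q2) \<and>
     partial_order_on R1 (rS \<inter> R1 \<times> R1) \<and> partial_order_on R2 (rT \<inter> R2 \<times> R2) \<and>
     order_iso Q rQ (Q1 \<times> Q2) (prod_order (rS \<inter> Q1 \<times> Q1) (rT \<inter> Q2 \<times> Q2)) \<and>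
     order_iso R rR (R1 \<times> R2) (prod_order (rS \<inter> R1 \<times> R1) (rT \<inter> R2 \<times> R2)) \<and>
     order_iso S rS (Q1 \<times> R1) (prod_order (rS \<inter> Q1 \<times> Q1) (rS \<inter> R1 \<times> R1)) \<and>
     order_iso T rT (Q2 \<times> R2) (prod_order (rT \<inter> Q2 \<times> Q2) (rT \<inter> R2 \<times> R2))"
proof -
  have a: "partial_order_on Q rQ" "partial_order_on R rR" "connected_poset Q rQ" "connected_poset R rR"
    "Q \<noteq> {}" "R \<noteq> {}" using assms(1,2) unfolding cpo_def by auto
  obtain Q1 Q2 R1 R2 where c: "Q1 \<subseteq> S" "Q2 \<subseteq> T" "R1 \<subseteq> S" "R2 \<subseteq> T"
     "order_iso Q rQ (Q1 \<times> Q2) (prod_order rS rT)" "order_iso R rR (R1 \<times> R2) (prod_order rS rT)"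
     "order_iso S rS (Q1 \<times> R1) (prod_order rS rS)" "order_iso T rT (Q2 \<times> R2) (prod_order rT rT)"
    using CR[OF a(1,2) assms(3,4) a(3-6) iso] by blast
  show ?thesis
  proof (intro exI conjI)
    show "partial_order_on Q1 (rS \<inter> Q1 \<times> Q1)" using po_restr[OF assms(3) c(1)] .
    show "partial_order_on R1 (rS \<inter> R1 \<times> R1)" using po_restr[OF assms(3) c(3)] .
    show "partial_order_on Q2 (rT \<inter> Q2 \<times> Q2)" using po_restr[OF assms(4) c(2)] .
    show "partial_order_on R2 (rT \<inter> R2 \<times> R2)" using po_restr[OF assms(4) c(4)] .
    show "order_iso Q rQ (Q1 \<times> Q2) (prod_order (rS \<inter> Q1 \<times> Q1) (rT \<inter> Q2 \<times> Q2))"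
      using c(5) iso_prod_restr by blast
    show "order_iso R rR (R1 \<times> R2) (prod_order (rS \<inter> R1 \<times> R1) (rT \<inter> R2 \<times> R2))"
      using c(6) iso_prod_restr by blast
    show "order_iso S rS (Q1 \<times> R1) (prod_order (rS \<inter> Q1 \<times> Q1) (rS \<inter> R1 \<times> R1))"
      using c(7) iso_prod_restr by blast
    show "order_iso T rT (Q2 \<times> R2) (prod_order (rT \<inter> Q2 \<times> Q2) (rT \<inter> R2 \<times> R2))"
      using c(8) iso_prod_restr by blast
  qed (fact c(1-4))+
qed

lemma cancel_nat:
  fixes p X Y :: "nat set"
  assumes "cpo p rp" "cpo X rX" "cpo Y rY"
    "order_iso (p \<times> X) (prod_order rp rX) (p \<times> Y) (prod_order rp rY)"
  shows "order_iso X rX Y rY"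
  using assms
proof (induction "card p" arbitrary: p rp X rX Y rY rule: less_induct)
  case less
  have pp: "partial_order_on p rp" "partial_order_on Y rY" using less.prems unfolding cpo_def by auto
  obtain p1 p2 x1 x2 where c: "p1 \<subseteq> p" "p2 \<subseteq> Y" "x1 \<subseteq> p" "x2 \<subseteq> Y"
     "partial_order_on p1 (rp \<inter> p1 \<times> p1)" "partial_order_on p2 (rY \<inter> p2 \<times> p2)"
     "partial_order_on x1 (rp \<inter> x1 \<times> x1)" "partial_order_on x2 (rY \<inter> x2 \<times> x2)"
     "order_iso p rp (p1 \<times> p2) (prod_order (rp \<inter> p1 \<times> p1) (rY \<inter> p2 \<times> p2))"
     "order_iso X rX (x1 \<times> x2) (prod_order (rp \<inter> x1 \<times> x1) (rY \<inter> x2 \<times> x2))"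
     "order_iso p rp (p1 \<times> x1) (prod_order (rp \<inter> p1 \<times> p1) (rp \<inter> x1 \<times> x1))"
     "order_iso Y rY (p2 \<times> x2) (prod_order (rY \<inter> p2 \<times> p2) (rY \<inter> x2 \<times> x2))"
    using CR'[OF less.prems(1,2) pp less.prems(4)] by blast
  define rp1 where "rp1 = rp \<inter> p1 \<times> p1"
  define rp2 where "rp2 = rY \<inter> p2 \<times> p2"
  define rx1 where "rx1 = rp \<inter> x1 \<times> x1"
  define rx2 where "rx2 = rY \<inter> x2 \<times> x2"
  note c = c[folded rp1_def rp2_def rx1_def rx2_def]
  have cp1: "cpo p1 rp1" and cp2: "cpo p2 rp2" using cpo_factor[OF less.prems(1) c(9) c(5,6)] by auto
  have cx1: "cpo x1 rx1" and cx2: "cpo x2 rx2" using cpo_factor[OF less.prems(2) c(10) c(7,8)] by auto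
  have k1: "card p = card p1 * card p2" using iso_card[OF c(9)] card_cartesian_product by metis
  have k2: "card p = card p1 * card x1" using iso_card[OF c(11)] card_cartesian_product by metis
  have pos: "card p1 > 0" "card p2 > 0" "card x1 > 0" using cp1 cp2 cx1 cpo_card_pos by auto
  show ?case
  proof (cases "card p1 = 1")
    case True
    have "order_iso p rp x1 rx1" using iso_trans[OF c(11) iso_unit_left[OF True c(5)]] .
    moreover have "order_iso p rp p2 rp2" using iso_trans[OF c(9) iso_unit_left[OF True c(5)]] .
    ultimately have "order_iso x1 rx1 p2 rp2" using iso_sym iso_trans by blast
    then have "order_iso (x1 \<times> x2) (prod_order rx1 rx2) (p2 \<times> x2) (prod_order rp2 rx2)"
      using iso_prod[OF _ iso_refl] by blast
    then show ?thesis using iso_trans[OF c(10)] iso_trans[OF _ iso_sym[OF c(12)]] by blast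
  next
    case False
    show ?thesis
    proof (cases "card p2 = 1")
      case True
      have "card x1 = 1" using k1 k2 True pos by simp
      then have "order_iso X rX x2 rx2" using iso_trans[OF c(10) iso_unit_left[OF _ c(7)]] by blast
      moreover have "order_iso Y rY x2 rx2" using iso_trans[OF c(12) iso_unit_left[OF True c(6)]] .
      ultimately show ?thesis using iso_sym iso_trans by blast
    next
      case False
      have "card p2 \<ge> 2" using False pos by linarith
      then have lt: "card p1 < card p" using k1 pos by (simp add: less_le_trans)
      have "order_iso (p1 \<times> p2) (prod_order rp1 rp2) (p1 \<times> x1) (prod_order rp1 rx1)"
        using iso_trans[OF iso_sym[OF c(9)] c(11)] .
      then have "order_iso p2 rp2 x1 rx1" using less.hyps[OF lt cp1 cp2 cx1] by blast
      then have "order_iso (p2 \<times> x2) (prod_order rp2 rx2) (x1 \<times> x2) (prod_order rx1 rx2)"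
        using iso_prod[OF _ iso_refl] by blast
      then show ?thesis using iso_trans[OF c(12)] iso_trans[OF _ iso_sym[OF c(10)]] iso_sym by blast
    qed
  qed
qed


lemma cancel:
  assumes "cpo p rp" "cpo X rX" "cpo Y rY"
    "order_iso (p \<times> X) (prod_order rp rX) (p \<times> Y) (prod_order rp rY)"
  shows "order_iso X rX Y rY"
proof -
  obtain pN :: "nat set" and rpN where a: "cpo pN rpN" "order_iso p rp pN rpN" using cpo_natify[OF assms(1)] by blast
  obtain XN :: "nat set" and rXN where b: "cpo XN rXN" "order_iso X rX XN rXN" using cpo_natify[OF assms(2)] by blast
  obtain YN :: "nat set" and rYN where c: "cpo YN rYN" "order_iso Y rY YN rYN" using cpo_natify[OF assms(3)] by blast
  have "order_iso (pN \<times> XN) (prod_order rpN rXN) (p \<times> X) (prod_order rp rX)"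
    using iso_prod[OF iso_sym[OF a(2)] iso_sym[OF b(2)]] .
  then have "order_iso (pN \<times> XN) (prod_order rpN rXN) (p \<times> Y) (prod_order rp rY)"
    using iso_trans assms(4) by blast
  then have "order_iso (pN \<times> XN) (prod_order rpN rXN) (pN \<times> YN) (prod_order rpN rYN)"
    using iso_trans iso_prod[OF a(2) c(2)] by blast
  then have "order_iso XN rXN YN rYN" using cancel_nat[OF a(1) b(1) c(1)] by blast
  then show ?thesis using iso_trans[OF b(2)] iso_trans[OF _ iso_sym[OF c(2)]] by blast
qed

definition indec :: "'a set \<Rightarrow> 'a rel \<Rightarrow> bool" where
  "indec P rP \<longleftrightarrow> card P \<ge> 2 \<and> (\<forall>(Q::nat set) rQ (R::nat set) rR. partial_order_on Q rQ \<longrightarrow>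
     partial_order_on R rR \<longrightarrow> finite Q \<longrightarrow> finite R \<longrightarrow> order_iso P rP (Q \<times> R) (prod_order rQ rR) \<longrightarrow>
     card Q = 1 \<or> card R = 1)"

lemma indecD:
  assumes "indec P rP" "partial_order_on Q rQ" "partial_order_on R rR" "finite Q" "finite R"
    "order_iso P rP (Q \<times> R) (prod_order rQ rR)"
  shows "card Q = 1 \<or> card R = 1"
proof -
  obtain QN :: "nat set" and rQN where a: "partial_order_on QN rQN" "finite QN" "order_iso Q rQ QN rQN"
    using po_natify[OF assms(2,4)] by blast
  obtain RN :: "nat set" and rRN where b: "partial_order_on RN rRN" "finite RN" "order_iso R rR RN rRN"
    using po_natify[OF assms(3,5)] by blast
  have "order_iso P rP (QN \<times> RN) (prod_order rQN rRN)" using iso_trans[OF assms(6) iso_prod[OF a(3) b(3)]] .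
  then have "card QN = 1 \<or> card RN = 1" using assms(1) a b unfolding indec_def by blast
  then show ?thesis using iso_card[OF a(3)] iso_card[OF b(3)] by simp
qed

definition dvdp :: "'p set \<Rightarrow> 'p rel \<Rightarrow> 'c set \<Rightarrow> 'c rel \<Rightarrow> bool" where
  "dvdp p rp C rC \<longleftrightarrow> (\<exists>C'. C' \<subseteq> C \<and> order_iso C rC (p \<times> C') (prod_order rp (rC \<inter> C' \<times> C')))"

lemma dvdpI:
  assumes "order_iso C rC (p \<times> C') (prod_order rp rC')" "partial_order_on p rp" "p \<noteq> {}"
  shows "dvdp p rp C rC"
proof -
  obtain C'' where "C'' \<subseteq> C" "order_iso C rC (p \<times> C'') (prod_order rp rC)"
    using slice_right[OF assms] by blast
  moreover have "rp \<inter> p \<times> p = rp" using po_sub[OF assms(2)] by blast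
  ultimately have "order_iso C rC (p \<times> C'') (prod_order rp (rC \<inter> C'' \<times> C''))"
    using iso_prod_restr[of C rC p C'' rp rC] by simp
  then show ?thesis unfolding dvdp_def using \<open>C'' \<subseteq> C\<close> by blast
qed


lemma exists_indec:
  assumes "cpo A rA" "card A \<ge> 2"
  shows "\<exists>(P::nat set) rP A'. indec P rP \<and> cpo P rP \<and> A' \<subseteq> A \<and>
           order_iso A rA (P \<times> A') (prod_order rP (rA \<inter> A' \<times> A'))"
proof -
  have pA: "partial_order_on A rA" "finite A" using assms(1) unfolding cpo_def by auto
  define M where "M = {n. \<exists>(Q::nat set) rQ (R::nat set) rR. partial_order_on Q rQ \<and> partial_order_on R rR \<and>
      finite Q \<and> finite R \<and> card Q = n \<and> n \<ge> 2 \<and> order_iso A rA (Q \<times> R) (prod_order rQ rR)}"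
  obtain AN :: "nat set" and rAN where an: "partial_order_on AN rAN" "finite AN" "order_iso A rA AN rAN"
    using po_natify[OF pA] by blast
  have "order_iso A rA (AN \<times> {0::nat}) (prod_order rAN {(0,0)})"
    using iso_trans[OF an(3) iso_sym[OF iso_unit_right[OF _ unit_po]]] by simp
  moreover have "card AN = card A" using iso_card[OF an(3)] by simp
  ultimately have "card A \<in> M" unfolding M_def
    apply (simp only: mem_Collect_eq)
    apply (rule exI[of _ AN], rule exI[of _ rAN], rule exI[of _ "{0::nat}"], rule exI[of _ "{(0,0)}"])
    using an unit_po assms(2) by simp
  then have mM: "(LEAST n. n \<in> M) \<in> M" by (rule LeastI)
  define m where "m = (LEAST n. n \<in> M)"
  have "m \<in> M" using mM m_def by simp
  then have "\<exists>(Q::nat set) rQ (R::nat set) rR. partial_order_on Q rQ \<and> partial_order_on R rR \<and>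
      finite Q \<and> finite R \<and> card Q = m \<and> m \<ge> 2 \<and> order_iso A rA (Q \<times> R) (prod_order rQ rR)"
    unfolding M_def by (simp only: mem_Collect_eq)
  then obtain Q :: "nat set" and rQ and R :: "nat set" and rR where
    q: "partial_order_on Q rQ" "partial_order_on R rR" "finite Q" "finite R" "card Q = m"
       "m \<ge> 2" "order_iso A rA (Q \<times> R) (prod_order rQ rR)"
    by blast
  have q6: "card Q \<ge> 2" using q(5,6) by simp
  have ind: "indec Q rQ"
    unfolding indec_def
  proof (intro conjI allI impI)
    show "2 \<le> card Q" by (fact q6)
    fix Q1 :: "nat set" and rQ1 and Q2 :: "nat set" and rQ2
    assume h: "partial_order_on Q1 rQ1" "partial_order_on Q2 rQ2" "finite Q1" "finite Q2"
      "order_iso Q rQ (Q1 \<times> Q2) (prod_order rQ1 rQ2)"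
    show "card Q1 = 1 \<or> card Q2 = 1"
    proof (rule ccontr)
      assume nn: "\<not> (card Q1 = 1 \<or> card Q2 = 1)"
      have kc: "card Q = card Q1 * card Q2" using iso_card[OF h(5)] by (simp add: card_cartesian_product)
      then have "card Q1 \<noteq> 0" "card Q2 \<noteq> 0" using q6 by (metis mult_0 not_numeral_le_zero, metis mult_0_right not_numeral_le_zero)
      then have ge: "card Q1 \<ge> 2" "card Q2 \<ge> 2" using nn by auto
      then have lt: "card Q1 < card Q" using kc by simp
      obtain R' :: "nat set" and rR' where r': "partial_order_on R' rR'" "finite R'"
        "order_iso (Q2 \<times> R) (prod_order rQ2 rR) R' rR'"
        using po_natify[OF po_prod[OF h(2) q(2)]] h(4) q(4) by blast
      have "order_iso A rA ((Q1 \<times> Q2) \<times> R) (prod_order (prod_order rQ1 rQ2) rR)"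
        using iso_trans[OF q(7) iso_prod[OF h(5) iso_refl]] .
      then have "order_iso A rA (Q1 \<times> (Q2 \<times> R)) (prod_order rQ1 (prod_order rQ2 rR))"
        using iso_trans[OF _ iso_assoc] by blast
      then have "order_iso A rA (Q1 \<times> R') (prod_order rQ1 rR')"
        using iso_trans[OF _ iso_prod[OF iso_refl r'(3)]] by blast
      then have "card Q1 \<in> M" unfolding M_def
        apply (simp only: mem_Collect_eq)
        apply (rule exI[of _ Q1], rule exI[of _ rQ1], rule exI[of _ R'], rule exI[of _ rR'])
        using h r' ge by simp
      then have "m \<le> card Q1" unfolding m_def by (rule Least_le)
      then show False using lt q(5) by simp
    qed
  qed
  have cQ: "cpo Q rQ" using cpo_factor[OF assms(1) q(7) q(1,2)] by blast
  then have neQ: "Q \<noteq> {}" unfolding cpo_def by blast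
  obtain A' where a': "A' \<subseteq> A" "order_iso A rA (Q \<times> A') (prod_order rQ rA)"
    using slice_right[OF q(7) q(1) neQ] by blast
  have "rQ \<inter> Q \<times> Q = rQ" using po_sub[OF q(1)] by blast
  then have "order_iso A rA (Q \<times> A') (prod_order rQ (rA \<inter> A' \<times> A'))"
    using a'(2) iso_prod_restr[of A rA Q A' rQ rA] by simp
  then show ?thesis using ind cQ a'(1) by blast
qed

lemma prime_lemma:
  assumes ind: "indec p rp" and cp: "cpo p rp" and cA': "cpo A' rA'" and cA: "cpo A rA"
    and iA: "order_iso A rA (p \<times> A') (prod_order rp rA')"
    and cB: "cpo B rB" and cC: "cpo C rC" and cD: "cpo D rD"
    and i: "order_iso (A \<times> B) (prod_order rA rB) (C \<times> D) (prod_order rC rD)"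
  shows "dvdp p rp C rC \<or> dvdp p rp D rD"
proof -
  have pC: "partial_order_on C rC" and pD: "partial_order_on D rD" and fC: "finite C" and fD: "finite D"
    using cC cD unfolding cpo_def by auto
  have pp: "partial_order_on p rp" "p \<noteq> {}" using cp unfolding cpo_def by auto
  obtain W1 X1 Y1 Z1 where c: "W1 \<subseteq> C" "X1 \<subseteq> D" "Y1 \<subseteq> C" "Z1 \<subseteq> D"
     "partial_order_on W1 (rC \<inter> W1 \<times> W1)" "partial_order_on X1 (rD \<inter> X1 \<times> X1)"
     "partial_order_on Y1 (rC \<inter> Y1 \<times> Y1)" "partial_order_on Z1 (rD \<inter> Z1 \<times> Z1)"
     "order_iso A rA (W1 \<times> X1) (prod_order (rC \<inter> W1 \<times> W1) (rD \<inter> X1 \<times> X1))"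
     "order_iso B rB (Y1 \<times> Z1) (prod_order (rC \<inter> Y1 \<times> Y1) (rD \<inter> Z1 \<times> Z1))"
     "order_iso C rC (W1 \<times> Y1) (prod_order (rC \<inter> W1 \<times> W1) (rC \<inter> Y1 \<times> Y1))"
     "order_iso D rD (X1 \<times> Z1) (prod_order (rD \<inter> X1 \<times> X1) (rD \<inter> Z1 \<times> Z1))"
    using CR'[OF cA cB pC pD i] by blast
  define rW1 where "rW1 = rC \<inter> W1 \<times> W1"
  define rX1 where "rX1 = rD \<inter> X1 \<times> X1"
  define rY1 where "rY1 = rC \<inter> Y1 \<times> Y1"
  define rZ1 where "rZ1 = rD \<inter> Z1 \<times> Z1"
  note c = c[folded rW1_def rX1_def rY1_def rZ1_def]
  have "order_iso (p \<times> A') (prod_order rp rA') (W1 \<times> X1) (prod_order rW1 rX1)"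
    using iso_trans[OF iso_sym[OF iA] c(9)] .
  obtain p1 p2 u v where d: "p1 \<subseteq> W1" "p2 \<subseteq> X1" "u \<subseteq> W1" "v \<subseteq> X1"
     "partial_order_on p1 (rW1 \<inter> p1 \<times> p1)" "partial_order_on p2 (rX1 \<inter> p2 \<times> p2)"
     "partial_order_on u (rW1 \<inter> u \<times> u)" "partial_order_on v (rX1 \<inter> v \<times> v)"
     "order_iso p rp (p1 \<times> p2) (prod_order (rW1 \<inter> p1 \<times> p1) (rX1 \<inter> p2 \<times> p2))"
     "order_iso W1 rW1 (p1 \<times> u) (prod_order (rW1 \<inter> p1 \<times> p1) (rW1 \<inter> u \<times> u))"
     "order_iso X1 rX1 (p2 \<times> v) (prod_order (rX1 \<inter> p2 \<times> p2) (rX1 \<inter> v \<times> v))"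
    using CR'[OF cp cA' c(5,6) \<open>order_iso (p \<times> A') _ _ _\<close>] by blast
  define rp1 where "rp1 = rW1 \<inter> p1 \<times> p1"
  define rp2 where "rp2 = rX1 \<inter> p2 \<times> p2"
  define ru where "ru = rW1 \<inter> u \<times> u"
  define rv where "rv = rX1 \<inter> v \<times> v"
  note d = d[folded rp1_def rp2_def ru_def rv_def]
  have fin: "finite p1" "finite p2" using finite_subset[OF d(1) finite_subset[OF c(1) fC]]
    finite_subset[OF d(2) finite_subset[OF c(2) fD]] by auto
  have "card p1 = 1 \<or> card p2 = 1" using indecD[OF ind d(5,6) fin d(9)] .
  then show ?thesis
  proof
    assume k: "card p2 = 1"
    have pp1: "order_iso p rp p1 rp1" using iso_trans[OF d(9) iso_unit_right[OF k d(6)]] .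
    have "order_iso C rC ((p1 \<times> u) \<times> Y1) (prod_order (prod_order rp1 ru) rY1)"
      using iso_trans[OF c(11) iso_prod[OF d(10) iso_refl]] .
    then have "order_iso C rC (p1 \<times> (u \<times> Y1)) (prod_order rp1 (prod_order ru rY1))"
      using iso_trans[OF _ iso_assoc] by blast
    then have "order_iso C rC (p \<times> (u \<times> Y1)) (prod_order rp (prod_order ru rY1))"
      using iso_trans[OF _ iso_prod[OF iso_sym[OF pp1] iso_refl]] by blast
    then have "dvdp p rp C rC" using dvdpI pp by blast
    then show ?thesis by blast
  next
    assume k: "card p1 = 1"
    have pp2: "order_iso p rp p2 rp2" using iso_trans[OF d(9) iso_unit_left[OF k d(5)]] .
    have "order_iso D rD ((p2 \<times> v) \<times> Z1) (prod_order (prod_order rp2 rv) rZ1)"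
      using iso_trans[OF c(12) iso_prod[OF d(11) iso_refl]] .
    then have "order_iso D rD (p2 \<times> (v \<times> Z1)) (prod_order rp2 (prod_order rv rZ1))"
      using iso_trans[OF _ iso_assoc] by blast
    then have "order_iso D rD (p \<times> (v \<times> Z1)) (prod_order rp (prod_order rv rZ1))"
      using iso_trans[OF _ iso_prod[OF iso_sym[OF pp2] iso_refl]] by blast
    then have "dvdp p rp D rD" using dvdpI pp by blast
    then show ?thesis by blast
  qed
qed

lemma choice2:
  assumes "\<forall>x\<in>S. \<exists>a b. P x a b"
  shows "\<exists>F G. \<forall>x\<in>S. P x (F x) (G x)"
proof -
  have "\<forall>x\<in>S. \<exists>ab. P x (fst ab) (snd ab)"
  proof
    fix x assume "x \<in> S"
    then obtain a b where "P x a b" using assms by blast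
    then show "\<exists>ab. P x (fst ab) (snd ab)" by (intro exI[of _ "(a,b)"]) simp
  qed
  from bchoice[OF this] obtain H where H: "\<forall>x\<in>S. P x (fst (H x)) (snd (H x))" by blast
  show ?thesis by (rule exI[of _ "\<lambda>x. fst (H x)"], rule exI[of _ "\<lambda>x. snd (H x)"]) (use H in blast)
qed

lemma iso_assoc_sym: "order_iso (S \<times> (T \<times> U)) (prod_order r (prod_order s t)) ((S \<times> T) \<times> U) (prod_order (prod_order r s) t)"
  by (rule iso_sym[OF iso_assoc])

theorem family:
  fixes A :: "'a set" and rA and J :: "'j set" and K :: "'k set"
    and C :: "'j \<Rightarrow> 'c set" and rC :: "'j \<Rightarrow> 'c rel" and D :: "'k \<Rightarrow> 'd set" and rD :: "'k \<Rightarrow> 'd rel"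
    and B :: "'j \<Rightarrow> 'k \<Rightarrow> 'b set" and rB :: "'j \<Rightarrow> 'k \<Rightarrow> 'b rel"
  assumes "cpo A rA" "\<forall>j\<in>J. cpo (C j) (rC j)" "\<forall>k\<in>K. cpo (D k) (rD k)" "\<forall>j\<in>J. \<forall>k\<in>K. cpo (B j k) (rB j k)"
    "\<forall>j\<in>J. \<forall>k\<in>K. order_iso (A \<times> B j k) (prod_order rA (rB j k)) (C j \<times> D k) (prod_order (rC j) (rD k))"
  shows "\<exists>(W::nat set) rW (X::nat set) rX (Y::'j \<Rightarrow> nat set) rY (Z::'k \<Rightarrow> nat set) rZ.
     partial_order_on W rW \<and> partial_order_on X rX \<and> finite W \<and> finite X \<and>
     (\<forall>j\<in>J. partial_order_on (Y j) (rY j)) \<and> (\<forall>k\<in>K. partial_order_on (Z k) (rZ k)) \<and>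
     order_iso A rA (W \<times> X) (prod_order rW rX) \<and>
     (\<forall>j\<in>J. order_iso (C j) (rC j) (W \<times> Y j) (prod_order rW (rY j))) \<and>
     (\<forall>k\<in>K. order_iso (D k) (rD k) (X \<times> Z k) (prod_order rX (rZ k))) \<and>
     (\<forall>j\<in>J. \<forall>k\<in>K. order_iso (B j k) (rB j k) (Y j \<times> Z k) (prod_order (rY j) (rZ k)))"
  using assms
proof (induction "card A" arbitrary: A rA C rC D rD rule: less_induct)
  case less
  note cA = less.prems(1) and cC = less.prems(2) and cD = less.prems(3) and cB = less.prems(4)
    and iABCD = less.prems(5)
  have pA: "partial_order_on A rA" "finite A" "A \<noteq> {}" using cA unfolding cpo_def by auto
  show ?case
  proof (cases "card A = 1")
    case True
    have "\<forall>j\<in>J. \<exists>(N::nat set) n. partial_order_on N n \<and> order_iso (C j) (rC j) N n"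
    proof
      fix j assume "j \<in> J"
      then have "partial_order_on (C j) (rC j)" "finite (C j)" using cC unfolding cpo_def by auto
      then show "\<exists>(N::nat set) n. partial_order_on N n \<and> order_iso (C j) (rC j) N n"
        using po_natify by blast
    qed
    then have "\<exists>(Y::'j \<Rightarrow> nat set) rY. \<forall>j\<in>J. partial_order_on (Y j) (rY j) \<and> order_iso (C j) (rC j) (Y j) (rY j)"
      by (rule choice2)
    then obtain Y :: "'j \<Rightarrow> nat set" and rY where Y: "\<forall>j\<in>J. partial_order_on (Y j) (rY j) \<and> order_iso (C j) (rC j) (Y j) (rY j)"
      by blast
    have "\<forall>k\<in>K. \<exists>(N::nat set) n. partial_order_on N n \<and> order_iso (D k) (rD k) N n"
    proof
      fix k assume "k \<in> K"
      then have "partial_order_on (D k) (rD k)" "finite (D k)" using cD unfolding cpo_def by auto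
      then show "\<exists>(N::nat set) n. partial_order_on N n \<and> order_iso (D k) (rD k) N n"
        using po_natify by blast
    qed
    then have "\<exists>(Z::'k \<Rightarrow> nat set) rZ. \<forall>k\<in>K. partial_order_on (Z k) (rZ k) \<and> order_iso (D k) (rD k) (Z k) (rZ k)"
      by (rule choice2)
    then obtain Z :: "'k \<Rightarrow> nat set" and rZ where Z: "\<forall>k\<in>K. partial_order_on (Z k) (rZ k) \<and> order_iso (D k) (rD k) (Z k) (rZ k)"
      by blast
    let ?U = "{0::nat}" and ?u = "{(0::nat,0::nat)}"
    have u1: "card ?U = 1" by simp
    have uu: "partial_order_on (?U \<times> ?U) (prod_order ?u ?u)" using po_prod[OF unit_po unit_po] .
    have 1: "order_iso A rA (?U \<times> ?U) (prod_order ?u ?u)"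
      using iso_card1[OF True pA(1) _ uu] by simp
    have 2: "\<forall>j\<in>J. order_iso (C j) (rC j) (?U \<times> Y j) (prod_order ?u (rY j))"
    proof
      fix j assume "j \<in> J"
      then have "order_iso (C j) (rC j) (Y j) (rY j)" using Y by blast
      then show "order_iso (C j) (rC j) (?U \<times> Y j) (prod_order ?u (rY j))"
        by (rule iso_trans[OF _ iso_sym[OF iso_unit_left[OF u1 unit_po]]])
    qed
    have 3: "\<forall>k\<in>K. order_iso (D k) (rD k) (?U \<times> Z k) (prod_order ?u (rZ k))"
    proof
      fix k assume "k \<in> K"
      then have "order_iso (D k) (rD k) (Z k) (rZ k)" using Z by blast
      then show "order_iso (D k) (rD k) (?U \<times> Z k) (prod_order ?u (rZ k))"
        by (rule iso_trans[OF _ iso_sym[OF iso_unit_left[OF u1 unit_po]]])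
    qed
    have 4: "\<forall>j\<in>J. \<forall>k\<in>K. order_iso (B j k) (rB j k) (Y j \<times> Z k) (prod_order (rY j) (rZ k))"
    proof (intro ballI)
      fix j k assume jk: "j \<in> J" "k \<in> K"
      have i1: "order_iso (B j k) (rB j k) (A \<times> B j k) (prod_order rA (rB j k))"
        using iso_sym[OF iso_unit_left[OF True pA(1)]] .
      have i2: "order_iso (A \<times> B j k) (prod_order rA (rB j k)) (C j \<times> D k) (prod_order (rC j) (rD k))"
        using iABCD jk by blast
      have i3: "order_iso (C j \<times> D k) (prod_order (rC j) (rD k)) (Y j \<times> Z k) (prod_order (rY j) (rZ k))"
      proof (rule iso_prod)
        show "order_iso (C j) (rC j) (Y j) (rY j)" using Y jk by blast
        show "order_iso (D k) (rD k) (Z k) (rZ k)" using Z jk by blast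
      qed
      show "order_iso (B j k) (rB j k) (Y j \<times> Z k) (prod_order (rY j) (rZ k))"
        by (rule iso_trans[OF i1 iso_trans[OF i2 i3]])
    qed
    show ?thesis
      apply (rule exI[of _ ?U], rule exI[of _ ?u], rule exI[of _ ?U], rule exI[of _ ?u])
      apply (rule exI[of _ Y], rule exI[of _ rY], rule exI[of _ Z], rule exI[of _ rZ])
      apply (intro conjI)
      using unit_po[of 0] Y Z 1 2 3 4 by auto
  next
    case False
    have "card A \<noteq> 0" using pA by simp
    then have cardA2: "card A \<ge> 2" using False by linarith
    obtain p :: "nat set" and rp A' where e: "indec p rp" "cpo p rp" "A' \<subseteq> A"
      "order_iso A rA (p \<times> A') (prod_order rp (rA \<inter> A' \<times> A'))"
      using exists_indec[OF cA cardA2] by blast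
    define rA' where "rA' = rA \<inter> A' \<times> A'"
    note e = e[folded rA'_def]
    have pA': "partial_order_on A' rA'" using po_restr[OF pA(1) e(3)] rA'_def by simp
    have pp: "partial_order_on p rp" "p \<noteq> {}" "finite p" using e(2) unfolding cpo_def by auto
    have cA': "cpo A' rA'" using cpo_factor[OF cA e(4) pp(1) pA'] by blast
    have kA: "card A = card p * card A'" using iso_card[OF e(4)] by (simp add: card_cartesian_product)
    have "card p \<ge> 2" using e(1) unfolding indec_def by blast
    moreover have "card A' > 0" using cpo_card_pos[OF cA'] .
    ultimately have lt: "card A' < card A" using kA by simp
    show ?thesis
    proof (cases "\<forall>j\<in>J. dvdp p rp (C j) (rC j)")
      case True
      have "\<forall>j\<in>J. \<exists>C'. C' \<subseteq> C j \<and> order_iso (C j) (rC j) (p \<times> C') (prod_order rp (rC j \<inter> C' \<times> C'))"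
        using True unfolding dvdp_def by blast
      from bchoice[OF this] obtain C' where C':
        "\<forall>j\<in>J. C' j \<subseteq> C j \<and> order_iso (C j) (rC j) (p \<times> C' j) (prod_order rp (rC j \<inter> C' j \<times> C' j))"
        by blast
      define rC' where "rC' j = rC j \<inter> C' j \<times> C' j" for j
      have C'i: "\<And>j. j \<in> J \<Longrightarrow> order_iso (C j) (rC j) (p \<times> C' j) (prod_order rp (rC' j))"
        using C' unfolding rC'_def by blast
      have cC': "\<forall>j\<in>J. cpo (C' j) (rC' j)"
      proof
        fix j assume j: "j \<in> J"
        have "partial_order_on (C j) (rC j)" using cC j unfolding cpo_def by blast
        then have "partial_order_on (C' j) (rC' j)" using po_restr C' j unfolding rC'_def by blast
        then show "cpo (C' j) (rC' j)" using cpo_factor[OF _ C'i[OF j] pp(1)] cC j by blast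
      qed
      have iso': "\<forall>j\<in>J. \<forall>k\<in>K. order_iso (A' \<times> B j k) (prod_order rA' (rB j k)) (C' j \<times> D k) (prod_order (rC' j) (rD k))"
      proof (intro ballI)
        fix j k assume j: "j \<in> J" and k: "k \<in> K"
        have i1: "order_iso (p \<times> (A' \<times> B j k)) (prod_order rp (prod_order rA' (rB j k))) ((p \<times> A') \<times> B j k) (prod_order (prod_order rp rA') (rB j k))"
          by (rule iso_assoc_sym)
        have i2: "order_iso ((p \<times> A') \<times> B j k) (prod_order (prod_order rp rA') (rB j k)) (A \<times> B j k) (prod_order rA (rB j k))"
          by (rule iso_prod[OF iso_sym[OF e(4)] iso_refl])
        have i3: "order_iso (A \<times> B j k) (prod_order rA (rB j k)) (C j \<times> D k) (prod_order (rC j) (rD k))"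
          using iABCD j k by blast
        have i4: "order_iso (C j \<times> D k) (prod_order (rC j) (rD k)) ((p \<times> C' j) \<times> D k) (prod_order (prod_order rp (rC' j)) (rD k))"
          by (rule iso_prod[OF C'i[OF j] iso_refl])
        have i5: "order_iso ((p \<times> C' j) \<times> D k) (prod_order (prod_order rp (rC' j)) (rD k)) (p \<times> (C' j \<times> D k)) (prod_order rp (prod_order (rC' j) (rD k)))"
          by (rule iso_assoc)
        have ch: "order_iso (p \<times> (A' \<times> B j k)) (prod_order rp (prod_order rA' (rB j k))) (p \<times> (C' j \<times> D k)) (prod_order rp (prod_order (rC' j) (rD k)))"
          by (rule iso_trans[OF i1 iso_trans[OF i2 iso_trans[OF i3 iso_trans[OF i4 i5]]]])
        have c1: "cpo (A' \<times> B j k) (prod_order rA' (rB j k))" using cpo_prod[OF cA'] cB j k by blast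
        have c2: "cpo (C' j \<times> D k) (prod_order (rC' j) (rD k))" using cpo_prod cC' cD j k by blast
        show "order_iso (A' \<times> B j k) (prod_order rA' (rB j k)) (C' j \<times> D k) (prod_order (rC' j) (rD k))"
          by (rule cancel[OF e(2) c1 c2 ch])
      qed
      obtain W' :: "nat set" and rW' and X :: "nat set" and rX and Y :: "'j \<Rightarrow> nat set" and rY
          and Z :: "'k \<Rightarrow> nat set" and rZ where
        ih: "partial_order_on W' rW'" "partial_order_on X rX" "finite W'" "finite X"
          "\<forall>j\<in>J. partial_order_on (Y j) (rY j)" "\<forall>k\<in>K. partial_order_on (Z k) (rZ k)"
          "order_iso A' rA' (W' \<times> X) (prod_order rW' rX)"
          "\<forall>j\<in>J. order_iso (C' j) (rC' j) (W' \<times> Y j) (prod_order rW' (rY j))"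
          "\<forall>k\<in>K. order_iso (D k) (rD k) (X \<times> Z k) (prod_order rX (rZ k))"
          "\<forall>j\<in>J. \<forall>k\<in>K. order_iso (B j k) (rB j k) (Y j \<times> Z k) (prod_order (rY j) (rZ k))"
        using less.hyps[OF lt cA' cC' cD cB iso'] by blast
      obtain W :: "nat set" and rW where w: "partial_order_on W rW" "finite W"
        "order_iso (p \<times> W') (prod_order rp rW') W rW"
        using po_natify[OF po_prod[OF pp(1) ih(1)]] pp(3) ih(3) by blast
      have 1: "order_iso A rA (W \<times> X) (prod_order rW rX)"
        using iso_trans[OF e(4) iso_trans[OF iso_prod[OF iso_refl ih(7)] iso_trans[OF iso_assoc_sym iso_prod[OF w(3) iso_refl]]]] .
      have 2: "\<forall>j\<in>J. order_iso (C j) (rC j) (W \<times> Y j) (prod_order rW (rY j))"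
      proof
        fix j assume j: "j \<in> J"
        have "order_iso (C' j) (rC' j) (W' \<times> Y j) (prod_order rW' (rY j))" using ih(8) j by blast
        then show "order_iso (C j) (rC j) (W \<times> Y j) (prod_order rW (rY j))"
          using iso_trans[OF C'i[OF j] iso_trans[OF iso_prod[OF iso_refl] iso_trans[OF iso_assoc_sym iso_prod[OF w(3) iso_refl]]]]
          by blast
      qed
      show ?thesis
        apply (rule exI[of _ W], rule exI[of _ rW], rule exI[of _ X], rule exI[of _ rX])
        apply (rule exI[of _ Y], rule exI[of _ rY], rule exI[of _ Z], rule exI[of _ rZ])
        apply (intro conjI)
        using w ih 1 2 by auto
    next
      case False
      then obtain j0 where j0: "j0 \<in> J" "\<not> dvdp p rp (C j0) (rC j0)" by blast
      have "\<forall>k\<in>K. dvdp p rp (D k) (rD k)"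
      proof
        fix k assume k: "k \<in> K"
        have i: "order_iso (A \<times> B j0 k) (prod_order rA (rB j0 k)) (C j0 \<times> D k) (prod_order (rC j0) (rD k))"
          using iABCD j0 k by blast
        have "cpo (B j0 k) (rB j0 k)" "cpo (C j0) (rC j0)" "cpo (D k) (rD k)" using cB cC cD j0 k by auto
        then show "dvdp p rp (D k) (rD k)" using prime_lemma[OF e(1,2) cA' cA e(4) _ _ _ i] j0 by blast
      qed
      then have "\<forall>k\<in>K. \<exists>D'. D' \<subseteq> D k \<and> order_iso (D k) (rD k) (p \<times> D') (prod_order rp (rD k \<inter> D' \<times> D'))"
        unfolding dvdp_def by blast
      from bchoice[OF this] obtain D' where D':
        "\<forall>k\<in>K. D' k \<subseteq> D k \<and> order_iso (D k) (rD k) (p \<times> D' k) (prod_order rp (rD k \<inter> D' k \<times> D' k))"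
        by blast
      define rD' where "rD' k = rD k \<inter> D' k \<times> D' k" for k
      have D'i: "\<And>k. k \<in> K \<Longrightarrow> order_iso (D k) (rD k) (p \<times> D' k) (prod_order rp (rD' k))"
        using D' unfolding rD'_def by blast
      have cD': "\<forall>k\<in>K. cpo (D' k) (rD' k)"
      proof
        fix k assume k: "k \<in> K"
        have "partial_order_on (D k) (rD k)" using cD k unfolding cpo_def by blast
        then have "partial_order_on (D' k) (rD' k)" using po_restr D' k unfolding rD'_def by blast
        then show "cpo (D' k) (rD' k)" using cpo_factor[OF _ D'i[OF k] pp(1)] cD k by blast
      qed
      have iso': "\<forall>j\<in>J. \<forall>k\<in>K. order_iso (A' \<times> B j k) (prod_order rA' (rB j k)) (C j \<times> D' k) (prod_order (rC j) (rD' k))"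
      proof (intro ballI)
        fix j k assume j: "j \<in> J" and k: "k \<in> K"
        have i1: "order_iso (p \<times> (A' \<times> B j k)) (prod_order rp (prod_order rA' (rB j k))) ((p \<times> A') \<times> B j k) (prod_order (prod_order rp rA') (rB j k))"
          by (rule iso_assoc_sym)
        have i2: "order_iso ((p \<times> A') \<times> B j k) (prod_order (prod_order rp rA') (rB j k)) (A \<times> B j k) (prod_order rA (rB j k))"
          by (rule iso_prod[OF iso_sym[OF e(4)] iso_refl])
        have i3: "order_iso (A \<times> B j k) (prod_order rA (rB j k)) (C j \<times> D k) (prod_order (rC j) (rD k))"
          using iABCD j k by blast
        have i4: "order_iso (C j \<times> D k) (prod_order (rC j) (rD k)) (C j \<times> (p \<times> D' k)) (prod_order (rC j) (prod_order rp (rD' k)))"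
          by (rule iso_prod[OF iso_refl D'i[OF k]])
        have i5: "order_iso (C j \<times> (p \<times> D' k)) (prod_order (rC j) (prod_order rp (rD' k))) ((C j \<times> p) \<times> D' k) (prod_order (prod_order (rC j) rp) (rD' k))"
          by (rule iso_assoc_sym)
        have i6: "order_iso ((C j \<times> p) \<times> D' k) (prod_order (prod_order (rC j) rp) (rD' k)) ((p \<times> C j) \<times> D' k) (prod_order (prod_order rp (rC j)) (rD' k))"
          by (rule iso_prod[OF iso_swap iso_refl])
        have i7: "order_iso ((p \<times> C j) \<times> D' k) (prod_order (prod_order rp (rC j)) (rD' k)) (p \<times> (C j \<times> D' k)) (prod_order rp (prod_order (rC j) (rD' k)))"
          by (rule iso_assoc)
        have ch: "order_iso (p \<times> (A' \<times> B j k)) (prod_order rp (prod_order rA' (rB j k))) (p \<times> (C j \<times> D' k)) (prod_order rp (prod_order (rC j) (rD' k)))"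
          by (rule iso_trans[OF i1 iso_trans[OF i2 iso_trans[OF i3 iso_trans[OF i4 iso_trans[OF i5 iso_trans[OF i6 i7]]]]]])
        have c1: "cpo (A' \<times> B j k) (prod_order rA' (rB j k))" using cpo_prod[OF cA'] cB j k by blast
        have c2: "cpo (C j \<times> D' k) (prod_order (rC j) (rD' k))" using cpo_prod cC cD' j k by blast
        show "order_iso (A' \<times> B j k) (prod_order rA' (rB j k)) (C j \<times> D' k) (prod_order (rC j) (rD' k))"
          by (rule cancel[OF e(2) c1 c2 ch])
      qed
      obtain W :: "nat set" and rW and X' :: "nat set" and rX' and Y :: "'j \<Rightarrow> nat set" and rY
          and Z :: "'k \<Rightarrow> nat set" and rZ where
        ih: "partial_order_on W rW" "partial_order_on X' rX'" "finite W" "finite X'"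
          "\<forall>j\<in>J. partial_order_on (Y j) (rY j)" "\<forall>k\<in>K. partial_order_on (Z k) (rZ k)"
          "order_iso A' rA' (W \<times> X') (prod_order rW rX')"
          "\<forall>j\<in>J. order_iso (C j) (rC j) (W \<times> Y j) (prod_order rW (rY j))"
          "\<forall>k\<in>K. order_iso (D' k) (rD' k) (X' \<times> Z k) (prod_order rX' (rZ k))"
          "\<forall>j\<in>J. \<forall>k\<in>K. order_iso (B j k) (rB j k) (Y j \<times> Z k) (prod_order (rY j) (rZ k))"
        using less.hyps[OF lt cA' cC cD' cB iso'] by blast
      obtain X :: "nat set" and rX where x: "partial_order_on X rX" "finite X"
        "order_iso (p \<times> X') (prod_order rp rX') X rX"
        using po_natify[OF po_prod[OF pp(1) ih(2)]] pp(3) ih(4) by blast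
      have a1: "order_iso (p \<times> (W \<times> X')) (prod_order rp (prod_order rW rX')) ((p \<times> W) \<times> X') (prod_order (prod_order rp rW) rX')"
        by (rule iso_assoc_sym)
      have a2: "order_iso ((p \<times> W) \<times> X') (prod_order (prod_order rp rW) rX') ((W \<times> p) \<times> X') (prod_order (prod_order rW rp) rX')"
        by (rule iso_prod[OF iso_swap iso_refl])
      have a3: "order_iso ((W \<times> p) \<times> X') (prod_order (prod_order rW rp) rX') (W \<times> (p \<times> X')) (prod_order rW (prod_order rp rX'))"
        by (rule iso_assoc)
      have a4: "order_iso (W \<times> (p \<times> X')) (prod_order rW (prod_order rp rX')) (W \<times> X) (prod_order rW rX)"
        by (rule iso_prod[OF iso_refl x(3)])
      have 1: "order_iso A rA (W \<times> X) (prod_order rW rX)"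
        using iso_trans[OF e(4) iso_trans[OF iso_prod[OF iso_refl ih(7)] iso_trans[OF a1 iso_trans[OF a2 iso_trans[OF a3 a4]]]]] .
      have 3: "\<forall>k\<in>K. order_iso (D k) (rD k) (X \<times> Z k) (prod_order rX (rZ k))"
      proof
        fix k assume k: "k \<in> K"
        have "order_iso (D' k) (rD' k) (X' \<times> Z k) (prod_order rX' (rZ k))" using ih(9) k by blast
        then show "order_iso (D k) (rD k) (X \<times> Z k) (prod_order rX (rZ k))"
          using iso_trans[OF D'i[OF k] iso_trans[OF iso_prod[OF iso_refl] iso_trans[OF iso_assoc_sym iso_prod[OF x(3) iso_refl]]]]
          by blast
      qed
      show ?thesis
        apply (rule exI[of _ W], rule exI[of _ rW], rule exI[of _ X], rule exI[of _ rX])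
        apply (rule exI[of _ Y], rule exI[of _ rY], rule exI[of _ Z], rule exI[of _ rZ])
        apply (intro conjI)
        using x ih 1 3 by auto
    qed
  qed
qed

definition pcomp :: "'a set \<Rightarrow> 'a rel \<Rightarrow> 'a \<Rightarrow> 'a set" where
  "pcomp S r x = {y \<in> S. (x,y) \<in> (r \<union> r\<inverse>)\<^sup>*}"

lemma rt_sym: "(x,y) \<in> (r \<union> r\<inverse>)\<^sup>* \<Longrightarrow> (y,x) \<in> (r \<union> r\<inverse>)\<^sup>*"
proof -
  assume "(x,y) \<in> (r \<union> r\<inverse>)\<^sup>*"
  then have "(y,x) \<in> ((r \<union> r\<inverse>)\<inverse>)\<^sup>*" by (rule rtrancl_converseI)
  moreover have "(r \<union> r\<inverse>)\<inverse> = r \<union> r\<inverse>" by auto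
  ultimately show ?thesis by simp
qed

lemma comp_self: "x \<in> S \<Longrightarrow> x \<in> pcomp S r x"
  by (simp add: pcomp_def)

lemma comp_sub: "pcomp S r x \<subseteq> S"
  by (auto simp: pcomp_def)

lemma comp_eq: "y \<in> pcomp S r x \<Longrightarrow> pcomp S r y = pcomp S r x"
proof -
  assume "y \<in> pcomp S r x"
  then have xy1: "(x,y) \<in> (r \<union> r\<inverse>)\<^sup>*" by (simp add: pcomp_def)
  have xy: "(x,y) \<in> (r \<union> r\<inverse>)\<^sup>*" "(y,x) \<in> (r \<union> r\<inverse>)\<^sup>*" using xy1 rt_sym[OF xy1] by auto
  show ?thesis
  proof (intro set_eqI iffI)
    fix z assume "z \<in> pcomp S r y"
    then have "z \<in> S" "(y,z) \<in> (r \<union> r\<inverse>)\<^sup>*" by (auto simp: pcomp_def)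
    then show "z \<in> pcomp S r x" using rtrancl_trans[OF xy(1)] by (simp add: pcomp_def)
  next
    fix z assume "z \<in> pcomp S r x"
    then have "z \<in> S" "(x,z) \<in> (r \<union> r\<inverse>)\<^sup>*" by (auto simp: pcomp_def)
    then show "z \<in> pcomp S r y" using rtrancl_trans[OF xy(2)] by (simp add: pcomp_def)
  qed
qed

lemma comp_disj: "z \<in> pcomp S r x \<Longrightarrow> z \<in> pcomp S r y \<Longrightarrow> pcomp S r x = pcomp S r y"
proof -
  assume a: "z \<in> pcomp S r x" "z \<in> pcomp S r y"
  have "pcomp S r z = pcomp S r x" by (rule comp_eq[OF a(1)])
  moreover have "pcomp S r z = pcomp S r y" by (rule comp_eq[OF a(2)])
  ultimately show ?thesis by simp
qed

lemma comp_rel: "r \<subseteq> S \<times> S \<Longrightarrow> (x,y) \<in> r \<Longrightarrow> y \<in> pcomp S r x"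
proof -
  assume a: "r \<subseteq> S \<times> S" "(x,y) \<in> r"
  then have "y \<in> S" by blast
  moreover have "(x,y) \<in> (r \<union> r\<inverse>)\<^sup>*" using a(2) by blast
  ultimately show ?thesis unfolding pcomp_def by blast
qed

lemma comp_conn:
  assumes "r \<subseteq> S \<times> S"
  shows "connected_poset (pcomp S r x) (r \<inter> pcomp S r x \<times> pcomp S r x)"
  unfolding connected_poset_def
proof (intro ballI)
  let ?c = "pcomp S r x" let ?r = "r \<inter> ?c \<times> ?c"
  fix y z assume y: "y \<in> ?c" and z: "z \<in> ?c"
  have xy: "(x,y) \<in> (r \<union> r\<inverse>)\<^sup>*" and xz: "(x,z) \<in> (r \<union> r\<inverse>)\<^sup>*" using y z unfolding pcomp_def by auto
  have "(y,z) \<in> (r \<union> r\<inverse>)\<^sup>*" using rtrancl_trans[OF rt_sym[OF xy] xz] .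
  then have "z \<in> ?c \<and> (y,z) \<in> (?r \<union> ?r\<inverse>)\<^sup>*"
  proof (induction rule: rtrancl_induct)
    case base then show ?case using y by simp
  next
    case (step w v)
    then have w: "w \<in> ?c" by blast
    have vS: "v \<in> S" using step(2) assms by auto
    have "(x,w) \<in> (r \<union> r\<inverse>)\<^sup>*" using w unfolding pcomp_def by blast
    then have "(x,v) \<in> (r \<union> r\<inverse>)\<^sup>*" using step(2) by (rule rtrancl_into_rtrancl)
    then have v: "v \<in> ?c" using vS unfolding pcomp_def by blast
    have "(w,v) \<in> ?r \<union> ?r\<inverse>" using step(2) w v by blast
    then show ?case using step.IH v by (meson rtrancl_into_rtrancl)
  qed
  then show "(y,z) \<in> (?r \<union> ?r\<inverse>)\<^sup>*" by blast
qed

lemma comp_cpo: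
  assumes "partial_order_on S r" "finite S" "x \<in> S"
  shows "cpo (pcomp S r x) (r \<inter> pcomp S r x \<times> pcomp S r x)"
  unfolding cpo_def using po_restr[OF assms(1) comp_sub] comp_conn[OF po_sub[OF assms(1)]]
    finite_subset[OF comp_sub assms(2)] comp_self[OF assms(3)] by blast

lemma comp_prod:
  assumes "partial_order_on C rC" "partial_order_on D rD" "c \<in> C" "d \<in> D"
  shows "pcomp (C \<times> D) (prod_order rC rD) (c,d) = pcomp C rC c \<times> pcomp D rD d"
proof
  show "pcomp (C \<times> D) (prod_order rC rD) (c,d) \<subseteq> pcomp C rC c \<times> pcomp D rD d"
  proof
    fix y assume "y \<in> pcomp (C \<times> D) (prod_order rC rD) (c,d)"
    then have y: "y \<in> C \<times> D" "((c,d),y) \<in> (prod_order rC rD \<union> (prod_order rC rD)\<inverse>)\<^sup>*" unfolding pcomp_def by auto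
    have h1: "\<And>u v. (u,v) \<in> prod_order rC rD \<Longrightarrow> (fst u, fst v) \<in> rC" by (simp add: prod_order_mem)
    have h2: "\<And>u v. (u,v) \<in> prod_order rC rD \<Longrightarrow> (snd u, snd v) \<in> rD" by (simp add: prod_order_mem)
    have "(fst (c,d), fst y) \<in> (rC \<union> rC\<inverse>)\<^sup>*" using path_map[OF y(2) h1] .
    moreover have "(snd (c,d), snd y) \<in> (rD \<union> rD\<inverse>)\<^sup>*" using path_map[OF y(2) h2] .
    ultimately show "y \<in> pcomp C rC c \<times> pcomp D rD d" using y(1) unfolding pcomp_def by (cases y) auto
  qed
next
  show "pcomp C rC c \<times> pcomp D rD d \<subseteq> pcomp (C \<times> D) (prod_order rC rD) (c,d)"
  proof
    fix y assume "y \<in> pcomp C rC c \<times> pcomp D rD d"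
    then obtain c' d' where y: "y = (c',d')" "c' \<in> C" "d' \<in> D" "(c,c') \<in> (rC \<union> rC\<inverse>)\<^sup>*" "(d,d') \<in> (rD \<union> rD\<inverse>)\<^sup>*"
      unfolding pcomp_def by auto
    have h1: "\<And>u v. (u,v) \<in> rC \<Longrightarrow> ((\<lambda>u. (u,d)) u, (\<lambda>u. (u,d)) v) \<in> prod_order rC rD"
      using po_refl[OF assms(2,4)] by simp
    have h2: "\<And>u v. (u,v) \<in> rD \<Longrightarrow> ((\<lambda>u. (c',u)) u, (\<lambda>u. (c',u)) v) \<in> prod_order rC rD"
      using po_refl[OF assms(1) y(2)] by simp
    have "((\<lambda>u. (u,d)) c, (\<lambda>u. (u,d)) c') \<in> (prod_order rC rD \<union> (prod_order rC rD)\<inverse>)\<^sup>*"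
      using y(4) h1 by (rule path_map)
    moreover have "((\<lambda>u. (c',u)) d, (\<lambda>u. (c',u)) d') \<in> (prod_order rC rD \<union> (prod_order rC rD)\<inverse>)\<^sup>*"
      using y(5) h2 by (rule path_map)
    ultimately have "((c,d),(c',d)) \<in> (prod_order rC rD \<union> (prod_order rC rD)\<inverse>)\<^sup>*"
      "((c',d),(c',d')) \<in> (prod_order rC rD \<union> (prod_order rC rD)\<inverse>)\<^sup>*" by simp_all
    then have "((c,d),(c',d')) \<in> (prod_order rC rD \<union> (prod_order rC rD)\<inverse>)\<^sup>*" by (rule rtrancl_trans)
    then show "y \<in> pcomp (C \<times> D) (prod_order rC rD) (c,d)" using y unfolding pcomp_def by auto
  qed
qed

lemma comp_conn_all: "connected_poset A r \<Longrightarrow> a \<in> A \<Longrightarrow> pcomp A r a = A"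
  unfolding pcomp_def connected_poset_def by auto

lemma comp_iso:
  assumes "bij_betw f M N" "\<forall>x\<in>M. \<forall>y\<in>M. (x,y) \<in> m \<longleftrightarrow> (f x, f y) \<in> n" "m \<subseteq> M \<times> M" "n \<subseteq> N \<times> N" "x \<in> M"
  shows "f ` pcomp M m x = pcomp N n (f x)"
proof
  have fM: "\<And>u. u \<in> M \<Longrightarrow> f u \<in> N" using assms(1) by (auto simp: bij_betw_def)
  show "f ` pcomp M m x \<subseteq> pcomp N n (f x)"
  proof
    fix z assume "z \<in> f ` pcomp M m x"
    then obtain y where y: "y \<in> M" "(x,y) \<in> (m \<union> m\<inverse>)\<^sup>*" "z = f y" unfolding pcomp_def by auto
    have h: "\<And>u v. (u,v) \<in> m \<Longrightarrow> (f u, f v) \<in> n" using assms(2,3) by blast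
    show "z \<in> pcomp N n (f x)" using path_map[OF y(2) h] fM y unfolding pcomp_def by auto
  qed
next
  let ?g = "inv_into M f"
  have gN: "\<And>u. u \<in> N \<Longrightarrow> ?g u \<in> M \<and> f (?g u) = u" using assms(1)
    by (auto simp: bij_betw_def inv_into_into f_inv_into_f)
  show "pcomp N n (f x) \<subseteq> f ` pcomp M m x"
  proof
    fix z assume "z \<in> pcomp N n (f x)"
    then have z: "z \<in> N" "(f x, z) \<in> (n \<union> n\<inverse>)\<^sup>*" unfolding pcomp_def by auto
    have h: "\<And>u v. (u,v) \<in> n \<Longrightarrow> (?g u, ?g v) \<in> m"
    proof -
      fix u v assume uv: "(u,v) \<in> n"
      then have "u \<in> N" "v \<in> N" using assms(4) by auto
      then show "(?g u, ?g v) \<in> m" using gN assms(2) uv by metis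
    qed
    have "(?g (f x), ?g z) \<in> (m \<union> m\<inverse>)\<^sup>*" using path_map[OF z(2) h] .
    moreover have "?g (f x) = x" using assms(1,5) by (simp add: bij_betw_def)
    ultimately have "?g z \<in> pcomp M m x" using gN[OF z(1)] unfolding pcomp_def by auto
    then show "z \<in> f ` pcomp M m x" using gN[OF z(1)] by (metis image_eqI)
  qed
qed

lemma glue:
  fixes Mf :: "'l \<Rightarrow> 'm set" and Nf :: "'l \<Rightarrow> 'n set"
  assumes M: "\<And>x. x \<in> M \<longleftrightarrow> (\<exists>l\<in>L. x \<in> Mf l)" and N: "\<And>x. x \<in> N \<longleftrightarrow> (\<exists>l\<in>L. x \<in> Nf l)"
    and dM: "\<And>l l'. l \<in> L \<Longrightarrow> l' \<in> L \<Longrightarrow> l \<noteq> l' \<Longrightarrow> Mf l \<inter> Mf l' = {}"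
    and dN: "\<And>l l'. l \<in> L \<Longrightarrow> l' \<in> L \<Longrightarrow> l \<noteq> l' \<Longrightarrow> Nf l \<inter> Nf l' = {}"
    and rM: "\<And>x y. (x,y) \<in> m \<Longrightarrow> x \<in> M \<Longrightarrow> y \<in> M \<Longrightarrow> \<exists>l\<in>L. x \<in> Mf l \<and> y \<in> Mf l"
    and rN: "\<And>x y. (x,y) \<in> n \<Longrightarrow> x \<in> N \<Longrightarrow> y \<in> N \<Longrightarrow> \<exists>l\<in>L. x \<in> Nf l \<and> y \<in> Nf l"
    and iso: "\<And>l. l \<in> L \<Longrightarrow> order_iso (Mf l) m (Nf l) n"
  shows "order_iso M m N n"
proof -
  have "\<forall>l\<in>L. \<exists>\<phi>. bij_betw \<phi> (Mf l) (Nf l) \<and> (\<forall>x\<in>Mf l. \<forall>y\<in>Mf l. (x,y) \<in> m \<longleftrightarrow> (\<phi> x, \<phi> y) \<in> n)"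
    using iso unfolding order_iso_def by blast
  from bchoice[OF this] obtain \<phi> where phi: "\<forall>l\<in>L. bij_betw (\<phi> l) (Mf l) (Nf l) \<and>
      (\<forall>x\<in>Mf l. \<forall>y\<in>Mf l. (x,y) \<in> m \<longleftrightarrow> (\<phi> l x, \<phi> l y) \<in> n)" by blast
  define blk where "blk x = (THE l. l \<in> L \<and> x \<in> Mf l)" for x
  have blk: "\<And>l x. l \<in> L \<Longrightarrow> x \<in> Mf l \<Longrightarrow> blk x = l"
  proof -
    fix l x assume lx: "l \<in> L" "x \<in> Mf l"
    show "blk x = l" unfolding blk_def
    proof (rule the_equality)
      show "l \<in> L \<and> x \<in> Mf l" using lx by simp
      fix l' assume "l' \<in> L \<and> x \<in> Mf l'"
      then show "l' = l" using dM[of l' l] lx by blast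
    qed
  qed
  define F where "F x = \<phi> (blk x) x" for x
  have F: "\<And>l x. l \<in> L \<Longrightarrow> x \<in> Mf l \<Longrightarrow> F x = \<phi> l x" using blk unfolding F_def by simp
  have phl: "\<And>l. l \<in> L \<Longrightarrow> bij_betw (\<phi> l) (Mf l) (Nf l)" using phi by blast
  have pho: "\<And>l x y. l \<in> L \<Longrightarrow> x \<in> Mf l \<Longrightarrow> y \<in> Mf l \<Longrightarrow> (x,y) \<in> m \<longleftrightarrow> (\<phi> l x, \<phi> l y) \<in> n"
    using phi by blast
  have Fin: "\<And>l x. l \<in> L \<Longrightarrow> x \<in> Mf l \<Longrightarrow> F x \<in> Nf l"
  proof -
    fix l x assume lx: "l \<in> L" "x \<in> Mf l"
    have "\<phi> l x \<in> Nf l" using phl[OF lx(1)] lx(2) unfolding bij_betw_def by blast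
    then show "F x \<in> Nf l" using F[OF lx] by simp
  qed
  show ?thesis
  proof (rule isoI[of F])
    show "bij_betw F M N"
    proof (rule bij_betwI')
      fix x y assume xy: "x \<in> M" "y \<in> M"
      obtain l where l1: "l \<in> L" "x \<in> Mf l" using M[of x] xy(1) by blast
      obtain l' where l2: "l' \<in> L" "y \<in> Mf l'" using M[of y] xy(2) by blast
      note l = l1 l2
      show "(F x = F y) = (x = y)"
      proof
        assume e: "F x = F y"
        have "l = l'"
        proof (rule ccontr)
          assume ne: "l \<noteq> l'"
          have d: "Nf l \<inter> Nf l' = {}" by (rule dN[OF l(1) l(3) ne])
          have "F x \<in> Nf l" by (rule Fin[OF l(1,2)])
          moreover have "F x \<in> Nf l'" using Fin[OF l(3,4)] e by simp
          ultimately show False using d by blast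
        qed
        have y': "y \<in> Mf l" using l(4) \<open>l = l'\<close> by simp
        have "\<phi> l x = F x" using F[OF l(1,2)] by simp
        also have "\<dots> = F y" by (rule e)
        also have "\<dots> = \<phi> l y" using F[OF l(1) y'] by simp
        finally have ee: "\<phi> l x = \<phi> l y" .
        have "inj_on (\<phi> l) (Mf l)" using phl[OF l(1)] by (simp add: bij_betw_def)
        then show "x = y" using ee l(2) y' by (simp add: inj_on_def)
      qed simp
    next
      fix x assume "x \<in> M"
      then obtain l where "l \<in> L" "x \<in> Mf l" using M[of x] by blast
      then show "F x \<in> N" using N[of "F x"] Fin by blast
    next
      fix y assume "y \<in> N"
      then obtain l where l: "l \<in> L" "y \<in> Nf l" using N[of y] by blast
      then obtain x where x: "x \<in> Mf l" "y = \<phi> l x" using phl[OF l(1)] unfolding bij_betw_def by blast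
      then have "y = F x" using F[OF l(1) x(1)] by simp
      moreover have "x \<in> M" using M[of x] l(1) x(1) by blast
      ultimately show "\<exists>x\<in>M. y = F x" by blast
    qed
  next
    fix x y assume xy: "x \<in> M" "y \<in> M"
    obtain l where l1: "l \<in> L" "x \<in> Mf l" using M[of x] xy(1) by blast
    obtain l' where l2: "l' \<in> L" "y \<in> Mf l'" using M[of y] xy(2) by blast
    note l = l1 l2
    show "(x, y) \<in> m \<longleftrightarrow> (F x, F y) \<in> n"
    proof (cases "l = l'")
      case True then show ?thesis using F[OF l(1,2)] F[OF l(3,4)] pho[OF l(1,2)] l(4) by simp
    next
      case False
      have "(x,y) \<notin> m"
      proof
        assume "(x,y) \<in> m"
        then obtain l2 where "l2 \<in> L" "x \<in> Mf l2" "y \<in> Mf l2" using rM xy by blast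
        then show False using dM[of l l2] dM[of l' l2] l False by blast
      qed
      moreover have "(F x, F y) \<notin> n"
      proof
        assume "(F x, F y) \<in> n"
        moreover have "F x \<in> N" "F y \<in> N" using Fin[OF l(1,2)] Fin[OF l(3,4)] N[of "F x"] N[of "F y"] l(1,3) by blast+
        ultimately obtain l2 where "l2 \<in> L" "F x \<in> Nf l2" "F y \<in> Nf l2" using rN by blast
        then show False using dN[of l l2] dN[of l' l2] l False Fin[OF l(1,2)] Fin[OF l(3,4)] by blast
      qed
      ultimately show ?thesis by blast
    qed
  qed
qed

definition tagrel :: "'j set \<Rightarrow> ('j \<Rightarrow> 'y rel) \<Rightarrow> ('j \<times> 'y) rel" where
  "tagrel J rY = {((j,y),(j',y')). j = j' \<and> j \<in> J \<and> (y,y') \<in> rY j}"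

lemma tagrel_iff[simp]: "((j,y),(j',y')) \<in> tagrel J rY \<longleftrightarrow> j = j' \<and> j \<in> J \<and> (y,y') \<in> rY j"
  by (simp add: tagrel_def)

lemma tag_iso:
  assumes "j \<in> J" shows "order_iso (Y j) (rY j) ({j} \<times> Y j) (tagrel J rY)"
proof (rule isoI[of "\<lambda>y. (j,y)"])
  show "bij_betw (Pair j) (Y j) ({j} \<times> Y j)" by (auto simp: bij_betw_def inj_on_def)
qed (simp add: assms)

lemma tag_po:
  assumes "\<forall>j\<in>J. partial_order_on (Y j) (rY j)"
  shows "partial_order_on (Sigma J Y) (tagrel J rY)"
proof (rule po_intro)
  show "tagrel J rY \<subseteq> Sigma J Y \<times> Sigma J Y"
  proof
    fix z assume "z \<in> tagrel J rY"
    then obtain j y y' where z: "z = ((j,y),(j,y'))" "j \<in> J" "(y,y') \<in> rY j" unfolding tagrel_def by blast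
    then have "y \<in> Y j" "y' \<in> Y j" using po_sub assms by blast+
    then show "z \<in> Sigma J Y \<times> Sigma J Y" using z by blast
  qed
  show "\<And>x. x \<in> Sigma J Y \<Longrightarrow> (x, x) \<in> tagrel J rY"
    using assms po_refl by fastforce
  show "\<And>x y z. (x, y) \<in> tagrel J rY \<Longrightarrow> (y, z) \<in> tagrel J rY \<Longrightarrow> (x, z) \<in> tagrel J rY"
  proof -
    fix x y z assume a: "(x, y) \<in> tagrel J rY" "(y, z) \<in> tagrel J rY"
    obtain j1 x1 where x: "x = (j1,x1)" by (cases x)
    obtain j2 y1 where y: "y = (j2,y1)" by (cases y)
    obtain j3 z1 where z: "z = (j3,z1)" by (cases z)
    have "j1 = j2" "j2 = j3" "j1 \<in> J" "(x1,y1) \<in> rY j1" "(y1,z1) \<in> rY j2" using a x y z by auto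
    then show "(x, z) \<in> tagrel J rY" using x z po_trans assms by fastforce
  qed
  show "\<And>x y. (x, y) \<in> tagrel J rY \<Longrightarrow> (y, x) \<in> tagrel J rY \<Longrightarrow> x = y"
  proof -
    fix x y assume a: "(x, y) \<in> tagrel J rY" "(y, x) \<in> tagrel J rY"
    obtain j1 x1 where x: "x = (j1,x1)" by (cases x)
    obtain j2 y1 where y: "y = (j2,y1)" by (cases y)
    have "j1 = j2" "j1 \<in> J" "(x1,y1) \<in> rY j1" "(y1,x1) \<in> rY j1" using a x y by auto
    then show "x = y" using x y po_antisym assms by fastforce
  qed
qed

lemma finv_comp:
  assumes pA: "partial_order_on A rA" and pB: "partial_order_on B rB"
    and pC: "partial_order_on C rC" and pD: "partial_order_on D rD"
    and cA: "connected_poset A rA"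
    and fb: "bij_betw f (A \<times> B) (C \<times> D)"
    and fo: "\<forall>x\<in>A \<times> B. \<forall>y\<in>A \<times> B. (x,y) \<in> prod_order rA rB \<longleftrightarrow> (f x, f y) \<in> prod_order rC rD"
    and c: "c \<in> C" and d: "d \<in> D"
  shows "inv_into (A \<times> B) f ` (pcomp C rC c \<times> pcomp D rD d) = A \<times> pcomp B rB (snd (inv_into (A \<times> B) f (c,d)))"
proof -
  let ?g = "inv_into (A \<times> B) f"
  have gb: "bij_betw ?g (C \<times> D) (A \<times> B)" by (rule bij_betw_inv_into[OF fb])
  have gi: "\<And>y. y \<in> C \<times> D \<Longrightarrow> ?g y \<in> A \<times> B \<and> f (?g y) = y"
    using fb by (auto simp: bij_betw_def inv_into_into f_inv_into_f)
  have go: "\<forall>x\<in>C \<times> D. \<forall>y\<in>C \<times> D. (x,y) \<in> prod_order rC rD \<longleftrightarrow> (?g x, ?g y) \<in> prod_order rA rB"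
  proof (intro ballI)
    fix x y assume "x \<in> C \<times> D" "y \<in> C \<times> D"
    then show "(x,y) \<in> prod_order rC rD \<longleftrightarrow> (?g x, ?g y) \<in> prod_order rA rB"
      using gi fo by metis
  qed
  have cd: "(c,d) \<in> C \<times> D" using c d by simp
  have "?g ` pcomp (C \<times> D) (prod_order rC rD) (c,d) = pcomp (A \<times> B) (prod_order rA rB) (?g (c,d))"
    by (rule comp_iso[OF gb go prod_order_sub[OF pC pD] prod_order_sub[OF pA pB] cd])
  moreover have "pcomp (C \<times> D) (prod_order rC rD) (c,d) = pcomp C rC c \<times> pcomp D rD d"
    by (rule comp_prod[OF pC pD c d])
  moreover obtain a b where ab: "?g (c,d) = (a,b)" by (cases "?g (c,d)")
  moreover have abm: "a \<in> A" "b \<in> B" using gi[OF cd] ab by auto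
  moreover have "pcomp (A \<times> B) (prod_order rA rB) (a,b) = pcomp A rA a \<times> pcomp B rB b"
    by (rule comp_prod[OF pA pB abm])
  moreover have "pcomp A rA a = A" by (rule comp_conn_all[OF cA abm(1)])
  ultimately show ?thesis by simp
qed


lemma top_main:
  fixes A :: "'a set" and rA :: "('a \<times> 'a) set"
    and B :: "'b set" and rB :: "('b \<times> 'b) set"
    and C :: "'c set" and rC :: "('c \<times> 'c) set"
    and D :: "'d set" and rD :: "('d \<times> 'd) set"
  assumes pA: "partial_order_on A rA" and pB: "partial_order_on B rB"
    and pC: "partial_order_on C rC" and pD: "partial_order_on D rD"
    and fA: "finite A" and fB: "finite B" and fC: "finite C" and fD: "finite D"
    and cA: "connected_poset A rA" and nA: "A \<noteq> {}"
    and iso: "order_iso (A \<times> B) (prod_order rA rB) (C \<times> D) (prod_order rC rD)"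
    and nB: "B \<noteq> {}"
  shows "\<exists>(W :: nat set) rW (X :: nat set) rX (Y :: nat set) rY (Z :: nat set) rZ.
           partial_order_on W rW \<and> partial_order_on X rX \<and>
           partial_order_on Y rY \<and> partial_order_on Z rZ \<and>
           order_iso A rA (W \<times> X) (prod_order rW rX) \<and>
           order_iso B rB (Y \<times> Z) (prod_order rY rZ) \<and>
           order_iso C rC (W \<times> Y) (prod_order rW rY) \<and>
           order_iso D rD (X \<times> Z) (prod_order rX rZ)"
proof -
  obtain f where fb: "bij_betw f (A \<times> B) (C \<times> D)"
    and fo: "\<forall>x\<in>A \<times> B. \<forall>y\<in>A \<times> B. (x,y) \<in> prod_order rA rB \<longleftrightarrow> (f x, f y) \<in> prod_order rC rD"
    using iso unfolding order_iso_def by blast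
  let ?g = "inv_into (A \<times> B) f"
  have gi: "\<And>y. y \<in> C \<times> D \<Longrightarrow> ?g y \<in> A \<times> B \<and> f (?g y) = y"
    using fb by (auto simp: bij_betw_def inv_into_into f_inv_into_f)
  have fi: "\<And>x. x \<in> A \<times> B \<Longrightarrow> f x \<in> C \<times> D \<and> ?g (f x) = x"
    using fb by (auto simp: bij_betw_def)
  define J where "J = (\<lambda>c. pcomp C rC c) ` C"
  define K where "K = (\<lambda>d. pcomp D rD d) ` D"
  define Bf where "Bf j k = snd ` (?g ` (j \<times> k))" for j k
  have cA': "cpo A rA" unfolding cpo_def using pA fA cA nA by blast
  have Bf_eq: "\<And>c d. c \<in> C \<Longrightarrow> d \<in> D \<Longrightarrow> Bf (pcomp C rC c) (pcomp D rD d) = pcomp B rB (snd (?g (c,d)))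
      \<and> ?g ` (pcomp C rC c \<times> pcomp D rD d) = A \<times> pcomp B rB (snd (?g (c,d)))"
  proof -
    fix c d assume c: "c \<in> C" and d: "d \<in> D"
    have e: "?g ` (pcomp C rC c \<times> pcomp D rD d) = A \<times> pcomp B rB (snd (?g (c,d)))"
      by (rule finv_comp[OF pA pB pC pD cA fb fo c d])
    then show "Bf (pcomp C rC c) (pcomp D rD d) = pcomp B rB (snd (?g (c,d)))
      \<and> ?g ` (pcomp C rC c \<times> pcomp D rD d) = A \<times> pcomp B rB (snd (?g (c,d)))"
      unfolding Bf_def using nA by simp
  qed
  have Bf_comp: "\<And>j k. j \<in> J \<Longrightarrow> k \<in> K \<Longrightarrow> \<exists>b\<in>B. Bf j k = pcomp B rB b \<and> ?g ` (j \<times> k) = A \<times> Bf j k"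
  proof -
    fix j k assume "j \<in> J" "k \<in> K"
    then obtain c d where cd: "c \<in> C" "d \<in> D" "j = pcomp C rC c" "k = pcomp D rD d"
      unfolding J_def K_def by blast
    have "snd (?g (c,d)) \<in> B" using gi[of "(c,d)"] cd by auto
    moreover have "Bf j k = pcomp B rB (snd (?g (c,d)))" "?g ` (j \<times> k) = A \<times> pcomp B rB (snd (?g (c,d)))"
      using Bf_eq[OF cd(1,2)] cd(3,4) by simp_all
    ultimately show "\<exists>b\<in>B. Bf j k = pcomp B rB b \<and> ?g ` (j \<times> k) = A \<times> Bf j k" by auto
  qed
  have cCj: "\<forall>j\<in>J. cpo j (rC \<inter> j \<times> j)" unfolding J_def using comp_cpo[OF pC fC] by blast
  have cDk: "\<forall>k\<in>K. cpo k (rD \<inter> k \<times> k)" unfolding K_def using comp_cpo[OF pD fD] by blast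
  have cBjk: "\<forall>j\<in>J. \<forall>k\<in>K. cpo (Bf j k) (rB \<inter> Bf j k \<times> Bf j k)"
  proof (intro ballI)
    fix j k assume jk: "j \<in> J" "k \<in> K"
    obtain b where b: "b \<in> B" "Bf j k = pcomp B rB b" using Bf_comp[OF jk] by blast
    show "cpo (Bf j k) (rB \<inter> Bf j k \<times> Bf j k)" using comp_cpo[OF pB fB b(1)] b(2) by simp
  qed
  have isojk: "\<forall>j\<in>J. \<forall>k\<in>K. order_iso (A \<times> Bf j k) (prod_order rA (rB \<inter> Bf j k \<times> Bf j k)) (j \<times> k) (prod_order (rC \<inter> j \<times> j) (rD \<inter> k \<times> k))"
  proof (intro ballI)
    fix j k assume jk: "j \<in> J" "k \<in> K"
    obtain c0 where c0: "j = pcomp C rC c0" using jk(1) unfolding J_def by blast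
    have jC: "j \<subseteq> C" using comp_sub[of C rC c0] c0 by simp
    obtain d0 where d0: "k = pcomp D rD d0" using jk(2) unfolding K_def by blast
    have kD: "k \<subseteq> D" using comp_sub[of D rD d0] d0 by simp
    obtain b where b: "b \<in> B" "Bf j k = pcomp B rB b" "?g ` (j \<times> k) = A \<times> Bf j k" using Bf_comp[OF jk] by blast
    have "Bf j k \<subseteq> B" using b(2) comp_sub[of B rB b] by simp
    then have sub: "A \<times> Bf j k \<subseteq> A \<times> B" by blast
    have img: "f ` (A \<times> Bf j k) = j \<times> k"
    proof -
      have "f ` (?g ` (j \<times> k)) = j \<times> k"
      proof (intro set_eqI iffI)
        fix y assume "y \<in> f ` (?g ` (j \<times> k))"
        then obtain z where "z \<in> j \<times> k" "y = f (?g z)" by blast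
        moreover have "z \<in> C \<times> D" using \<open>z \<in> j \<times> k\<close> jC kD by blast
        ultimately show "y \<in> j \<times> k" using gi[of z] by simp
      next
        fix y assume y: "y \<in> j \<times> k"
        then have "y \<in> C \<times> D" using jC kD by blast
        then have "f (?g y) = y" using gi by blast
        then show "y \<in> f ` (?g ` (j \<times> k))" using y by force
      qed
      then show ?thesis using b(3) by simp
    qed
    have "inj_on f (A \<times> B)" using fb by (simp add: bij_betw_def)
    then have "inj_on f (A \<times> Bf j k)" by (rule inj_on_subset[OF _ sub])
    then have bj: "bij_betw f (A \<times> Bf j k) (j \<times> k)" using img by (simp add: bij_betw_def)
    have i0: "order_iso (A \<times> Bf j k) (prod_order rA rB) (j \<times> k) (prod_order rC rD)"
    proof (rule isoI[OF bj])
      fix x y assume "x \<in> A \<times> Bf j k" "y \<in> A \<times> Bf j k"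
      then have "x \<in> A \<times> B" "y \<in> A \<times> B" using sub by blast+
      then show "(x,y) \<in> prod_order rA rB \<longleftrightarrow> (f x, f y) \<in> prod_order rC rD" using fo by blast
    qed
    have i1: "order_iso (A \<times> Bf j k) (prod_order rA rB) (j \<times> k) (prod_order (rC \<inter> j \<times> j) (rD \<inter> k \<times> k))"
      by (rule iso_cong_right[OF i0]) (auto simp: prod_order_mem)
    have i2: "order_iso (A \<times> Bf j k) (prod_order rA (rB \<inter> Bf j k \<times> Bf j k)) (j \<times> k) (prod_order (rC \<inter> j \<times> j) (rD \<inter> k \<times> k))"
      by (rule iso_cong_left[OF i1]) (auto simp: prod_order_mem)
    show "order_iso (A \<times> Bf j k) (prod_order rA (rB \<inter> Bf j k \<times> Bf j k)) (j \<times> k) (prod_order (rC \<inter> j \<times> j) (rD \<inter> k \<times> k))"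
      by (rule i2)
  qed
  obtain W :: "nat set" and rW and X :: "nat set" and rX and Y :: "'c set \<Rightarrow> nat set" and rY
      and Z :: "'d set \<Rightarrow> nat set" and rZ where
    fam: "partial_order_on W rW" "partial_order_on X rX" "finite W" "finite X"
      "\<forall>j\<in>J. partial_order_on (Y j) (rY j)" "\<forall>k\<in>K. partial_order_on (Z k) (rZ k)"
      "order_iso A rA (W \<times> X) (prod_order rW rX)"
      "\<forall>j\<in>J. order_iso j (rC \<inter> j \<times> j) (W \<times> Y j) (prod_order rW (rY j))"
      "\<forall>k\<in>K. order_iso k (rD \<inter> k \<times> k) (X \<times> Z k) (prod_order rX (rZ k))"
      "\<forall>j\<in>J. \<forall>k\<in>K. order_iso (Bf j k) (rB \<inter> Bf j k \<times> Bf j k) (Y j \<times> Z k) (prod_order (rY j) (rZ k))"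
    using family[of A rA J "\<lambda>j. j" "\<lambda>j. rC \<inter> j \<times> j" K "\<lambda>k. k" "\<lambda>k. rD \<inter> k \<times> k" Bf "\<lambda>j k. rB \<inter> Bf j k \<times> Bf j k",
        OF cA' cCj cDk cBjk isojk] by blast
  have "W \<times> X \<noteq> {}" using iso_empty_iff[OF fam(7)] nA by simp
  then have nWX: "W \<noteq> {}" "X \<noteq> {}" by auto
  have fJ: "finite J" unfolding J_def using fC by simp
  have fK: "finite K" unfolding K_def using fD by simp
  have jC: "\<And>j. j \<in> J \<Longrightarrow> j \<subseteq> C" unfolding J_def using comp_sub by fastforce
  have kD: "\<And>k. k \<in> K \<Longrightarrow> k \<subseteq> D" unfolding K_def using comp_sub by fastforce
  have fYj: "\<forall>j\<in>J. finite (Y j)"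
  proof
    fix j assume j: "j \<in> J"
    have "finite j" using finite_subset[OF jC[OF j] fC] .
    moreover have "order_iso j (rC \<inter> j \<times> j) (W \<times> Y j) (prod_order rW (rY j))" using fam(8) j by blast
    ultimately have "finite (W \<times> Y j)" using iso_finite[of j "rC \<inter> j \<times> j" "W \<times> Y j" "prod_order rW (rY j)"] by simp
    then show "finite (Y j)" using nWX(1) finite_cartesian_productD2[of W "Y j"] by simp
  qed
  have fZk: "\<forall>k\<in>K. finite (Z k)"
  proof
    fix k assume k: "k \<in> K"
    have "finite k" using finite_subset[OF kD[OF k] fD] .
    moreover have "order_iso k (rD \<inter> k \<times> k) (X \<times> Z k) (prod_order rX (rZ k))" using fam(9) k by blast
    ultimately have "finite (X \<times> Z k)" using iso_finite[of k "rD \<inter> k \<times> k" "X \<times> Z k" "prod_order rX (rZ k)"] by simp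
    then show "finite (Z k)" using nWX(2) finite_cartesian_productD2[of X "Z k"] by simp
  qed
  define Yt where "Yt = Sigma J Y"
  define rYt where "rYt = tagrel J rY"
  define Zt where "Zt = Sigma K Z"
  define rZt where "rZt = tagrel K rZ"
  have pYt: "partial_order_on Yt rYt" unfolding Yt_def rYt_def using tag_po[OF fam(5)] .
  have pZt: "partial_order_on Zt rZt" unfolding Zt_def rZt_def using tag_po[OF fam(6)] .
  have fYt: "finite Yt" unfolding Yt_def using fJ fYj by (simp add: finite_SigmaI)
  have fZt: "finite Zt" unfolding Zt_def using fK fZk by (simp add: finite_SigmaI)
  have isoC: "order_iso C rC (W \<times> Yt) (prod_order rW rYt)"
  proof (rule glue[of C J "\<lambda>j. j" "W \<times> Yt" "\<lambda>j. W \<times> ({j} \<times> Y j)"])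
    fix x show "x \<in> C \<longleftrightarrow> (\<exists>j\<in>J. x \<in> j)"
    proof
      assume x: "x \<in> C"
      have "pcomp C rC x \<in> J" unfolding J_def using x by (rule imageI)
      moreover have "x \<in> pcomp C rC x" by (rule comp_self[OF x])
      ultimately show "\<exists>j\<in>J. x \<in> j" by (rule bexI[rotated])
    next
      assume "\<exists>j\<in>J. x \<in> j"
      then obtain j where "j \<in> J" "x \<in> j" by blast
      then show "x \<in> C" using jC by blast
    qed
  next
    fix x show "x \<in> W \<times> Yt \<longleftrightarrow> (\<exists>j\<in>J. x \<in> W \<times> ({j} \<times> Y j))"
    proof
      assume "x \<in> W \<times> Yt"
      then have "fst x \<in> W" "fst (snd x) \<in> J" "snd (snd x) \<in> Y (fst (snd x))" unfolding Yt_def by auto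
      then have h: "x \<in> W \<times> ({fst (snd x)} \<times> Y (fst (snd x)))" by (cases x) auto
      show "\<exists>j\<in>J. x \<in> W \<times> ({j} \<times> Y j)" using h \<open>fst (snd x) \<in> J\<close> by (intro bexI[where x="fst (snd x)"])
    next
      assume "\<exists>j\<in>J. x \<in> W \<times> ({j} \<times> Y j)"
      then obtain j where "j \<in> J" "x \<in> W \<times> ({j} \<times> Y j)" by blast
      then show "x \<in> W \<times> Yt" unfolding Yt_def by auto
    qed
  next
    fix j j' assume a: "j \<in> J" "j' \<in> J" "j \<noteq> j'"
    obtain c1 where e1: "j = pcomp C rC c1" using a(1) unfolding J_def by blast
    obtain c2 where e2: "j' = pcomp C rC c2" using a(2) unfolding J_def by blast
    show "j \<inter> j' = {}"
    proof (rule equals0I)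
      fix z assume "z \<in> j \<inter> j'"
      then have "z \<in> pcomp C rC c1" "z \<in> pcomp C rC c2" using e1 e2 by auto
      then have "pcomp C rC c1 = pcomp C rC c2" by (rule comp_disj)
      then show False using a(3) e1 e2 by simp
    qed
  next
    fix j j' :: "'c set" assume ne: "j \<noteq> j'"
    show "W \<times> ({j} \<times> Y j) \<inter> W \<times> ({j'} \<times> Y j') = {}"
    proof (rule equals0I)
      fix z assume "z \<in> W \<times> ({j} \<times> Y j) \<inter> W \<times> ({j'} \<times> Y j')"
      then have "fst (snd z) = j" "fst (snd z) = j'" by auto
      then show False using ne by simp
    qed
  next
    fix x y assume xy: "(x,y) \<in> rC" "x \<in> C" "y \<in> C"
    have "pcomp C rC x \<in> J" using xy(2) unfolding J_def by blast
    moreover have "x \<in> pcomp C rC x" using comp_self xy(2) .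
    moreover have "y \<in> pcomp C rC x" using comp_rel[OF po_sub[OF pC] xy(1)] .
    ultimately show "\<exists>j\<in>J. x \<in> j \<and> y \<in> j" by blast
  next
    fix x y assume xy: "(x,y) \<in> prod_order rW rYt" "x \<in> W \<times> Yt" "y \<in> W \<times> Yt"
    obtain w j u where x: "x = (w,(j,u))" by (cases x) auto
    obtain w' j' u' where y: "y = (w',(j',u'))" by (cases y) auto
    have "j = j'" "j \<in> J" using xy(1) x y unfolding rYt_def by auto
    moreover have "x \<in> W \<times> ({j} \<times> Y j)" using xy(2) x unfolding Yt_def by auto
    moreover have "y \<in> W \<times> ({j'} \<times> Y j')" using xy(3) y unfolding Yt_def by auto
    ultimately show "\<exists>j\<in>J. x \<in> W \<times> ({j} \<times> Y j) \<and> y \<in> W \<times> ({j} \<times> Y j)"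
      by blast
  next
    fix j assume j: "j \<in> J"
    have "order_iso j (rC \<inter> j \<times> j) (W \<times> Y j) (prod_order rW (rY j))" using fam(8) j by blast
    then have "order_iso j rC (W \<times> Y j) (prod_order rW (rY j))" by (rule iso_restr_left')
    moreover have "order_iso (W \<times> Y j) (prod_order rW (rY j)) (W \<times> ({j} \<times> Y j)) (prod_order rW rYt)"
      unfolding rYt_def by (rule iso_prod[OF iso_refl tag_iso[OF j]])
    ultimately show "order_iso j rC (W \<times> ({j} \<times> Y j)) (prod_order rW rYt)" by (rule iso_trans)
  qed
  have isoD: "order_iso D rD (X \<times> Zt) (prod_order rX rZt)"
  proof (rule glue[of D K "\<lambda>k. k" "X \<times> Zt" "\<lambda>k. X \<times> ({k} \<times> Z k)"])
    fix x show "x \<in> D \<longleftrightarrow> (\<exists>k\<in>K. x \<in> k)"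
    proof
      assume x: "x \<in> D"
      have "pcomp D rD x \<in> K" unfolding K_def using x by (rule imageI)
      moreover have "x \<in> pcomp D rD x" by (rule comp_self[OF x])
      ultimately show "\<exists>k\<in>K. x \<in> k" by (rule bexI[rotated])
    next
      assume "\<exists>k\<in>K. x \<in> k"
      then obtain k where "k \<in> K" "x \<in> k" by blast
      then show "x \<in> D" using kD by blast
    qed
  next
    fix x show "x \<in> X \<times> Zt \<longleftrightarrow> (\<exists>k\<in>K. x \<in> X \<times> ({k} \<times> Z k))"
    proof
      assume "x \<in> X \<times> Zt"
      then have "fst x \<in> X" "fst (snd x) \<in> K" "snd (snd x) \<in> Z (fst (snd x))" unfolding Zt_def by auto
      then have h: "x \<in> X \<times> ({fst (snd x)} \<times> Z (fst (snd x)))" by (cases x) auto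
      show "\<exists>k\<in>K. x \<in> X \<times> ({k} \<times> Z k)" using h \<open>fst (snd x) \<in> K\<close> by (intro bexI[where x="fst (snd x)"])
    next
      assume "\<exists>k\<in>K. x \<in> X \<times> ({k} \<times> Z k)"
      then obtain k where "k \<in> K" "x \<in> X \<times> ({k} \<times> Z k)" by blast
      then show "x \<in> X \<times> Zt" unfolding Zt_def by auto
    qed
  next
    fix k k' assume a: "k \<in> K" "k' \<in> K" "k \<noteq> k'"
    obtain d1 where e1: "k = pcomp D rD d1" using a(1) unfolding K_def by blast
    obtain d2 where e2: "k' = pcomp D rD d2" using a(2) unfolding K_def by blast
    show "k \<inter> k' = {}"
    proof (rule equals0I)
      fix z assume "z \<in> k \<inter> k'"
      then have "z \<in> pcomp D rD d1" "z \<in> pcomp D rD d2" using e1 e2 by auto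
      then have "pcomp D rD d1 = pcomp D rD d2" by (rule comp_disj)
      then show False using a(3) e1 e2 by simp
    qed
  next
    fix k k' :: "'d set" assume ne: "k \<noteq> k'"
    show "X \<times> ({k} \<times> Z k) \<inter> X \<times> ({k'} \<times> Z k') = {}"
    proof (rule equals0I)
      fix z assume "z \<in> X \<times> ({k} \<times> Z k) \<inter> X \<times> ({k'} \<times> Z k')"
      then have "fst (snd z) = k" "fst (snd z) = k'" by auto
      then show False using ne by simp
    qed
  next
    fix x y assume xy: "(x,y) \<in> rD" "x \<in> D" "y \<in> D"
    have "pcomp D rD x \<in> K" using xy(2) unfolding K_def by blast
    moreover have "x \<in> pcomp D rD x" using comp_self xy(2) .
    moreover have "y \<in> pcomp D rD x" using comp_rel[OF po_sub[OF pD] xy(1)] .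
    ultimately show "\<exists>k\<in>K. x \<in> k \<and> y \<in> k" by blast
  next
    fix x y assume xy: "(x,y) \<in> prod_order rX rZt" "x \<in> X \<times> Zt" "y \<in> X \<times> Zt"
    obtain w j u where x: "x = (w,(j,u))" by (cases x) auto
    obtain w' j' u' where y: "y = (w',(j',u'))" by (cases y) auto
    have "j = j'" "j \<in> K" using xy(1) x y unfolding rZt_def by auto
    moreover have "x \<in> X \<times> ({j} \<times> Z j)" using xy(2) x unfolding Zt_def by auto
    moreover have "y \<in> X \<times> ({j'} \<times> Z j')" using xy(3) y unfolding Zt_def by auto
    ultimately show "\<exists>k\<in>K. x \<in> X \<times> ({k} \<times> Z k) \<and> y \<in> X \<times> ({k} \<times> Z k)"
      by blast
  next
    fix k assume k: "k \<in> K"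
    have "order_iso k (rD \<inter> k \<times> k) (X \<times> Z k) (prod_order rX (rZ k))" using fam(9) k by blast
    then have "order_iso k rD (X \<times> Z k) (prod_order rX (rZ k))" by (rule iso_restr_left')
    moreover have "order_iso (X \<times> Z k) (prod_order rX (rZ k)) (X \<times> ({k} \<times> Z k)) (prod_order rX rZt)"
      unfolding rZt_def by (rule iso_prod[OF iso_refl tag_iso[OF k]])
    ultimately show "order_iso k rD (X \<times> ({k} \<times> Z k)) (prod_order rX rZt)" by (rule iso_trans)
  qed
  have compJ: "\<And>j j' z. j \<in> J \<Longrightarrow> j' \<in> J \<Longrightarrow> z \<in> j \<Longrightarrow> z \<in> j' \<Longrightarrow> j = j'"
  proof -
    fix j j' z assume a: "j \<in> J" "j' \<in> J" "z \<in> j" "z \<in> j'"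
    obtain c1 where e1: "j = pcomp C rC c1" using a(1) unfolding J_def by blast
    obtain c2 where e2: "j' = pcomp C rC c2" using a(2) unfolding J_def by blast
    have "pcomp C rC c1 = pcomp C rC c2" using comp_disj[of z C rC c1 c2] a(3,4) e1 e2 by simp
    then show "j = j'" using e1 e2 by simp
  qed
  have compK: "\<And>k k' z. k \<in> K \<Longrightarrow> k' \<in> K \<Longrightarrow> z \<in> k \<Longrightarrow> z \<in> k' \<Longrightarrow> k = k'"
  proof -
    fix k k' z assume a: "k \<in> K" "k' \<in> K" "z \<in> k" "z \<in> k'"
    obtain c1 where e1: "k = pcomp D rD c1" using a(1) unfolding K_def by blast
    obtain c2 where e2: "k' = pcomp D rD c2" using a(2) unfolding K_def by blast
    have "pcomp D rD c1 = pcomp D rD c2" using comp_disj[of z D rD c1 c2] a(3,4) e1 e2 by simp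
    then show "k = k'" using e1 e2 by simp
  qed
  have Bcov: "\<And>x. x \<in> B \<longleftrightarrow> (\<exists>l\<in>J \<times> K. x \<in> (case l of (j,k) \<Rightarrow> Bf j k))"
  proof
    fix x assume x: "x \<in> B"
    obtain a where a: "a \<in> A" using nA by blast
    obtain c d where cd: "f (a,x) = (c,d)" by (cases "f (a,x)")
    have ax: "(a,x) \<in> A \<times> B" using a x by simp
    have cdm: "c \<in> C" "d \<in> D" using fi[OF ax] cd by auto
    have gcd: "?g (c,d) = (a,x)" using fi[OF ax] cd by simp
    have "Bf (pcomp C rC c) (pcomp D rD d) = pcomp B rB x" using Bf_eq[OF cdm] gcd by simp
    moreover have "x \<in> pcomp B rB x" by (rule comp_self[OF x])
    moreover have "(pcomp C rC c, pcomp D rD d) \<in> J \<times> K" unfolding J_def K_def using cdm by blast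
    ultimately show "\<exists>l\<in>J \<times> K. x \<in> (case l of (j,k) \<Rightarrow> Bf j k)" by force
  next
    fix x assume "\<exists>l\<in>J \<times> K. x \<in> (case l of (j,k) \<Rightarrow> Bf j k)"
    then obtain j k where jk: "j \<in> J" "k \<in> K" "x \<in> Bf j k" by blast
    obtain b where "b \<in> B" "Bf j k = pcomp B rB b" using Bf_comp[OF jk(1,2)] by blast
    then show "x \<in> B" using jk(3) comp_sub[of B rB b] by blast
  qed
  have isoB: "order_iso B rB (Yt \<times> Zt) (prod_order rYt rZt)"
  proof (rule glue[of B "J \<times> K" "\<lambda>(j,k). Bf j k" "Yt \<times> Zt" "\<lambda>(j,k). ({j} \<times> Y j) \<times> ({k} \<times> Z k)"])
    fix x show "x \<in> B \<longleftrightarrow> (\<exists>l\<in>J \<times> K. x \<in> (case l of (j,k) \<Rightarrow> Bf j k))" by (rule Bcov)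
  next
    fix x show "x \<in> Yt \<times> Zt \<longleftrightarrow> (\<exists>l\<in>J \<times> K. x \<in> (case l of (j,k) \<Rightarrow> ({j} \<times> Y j) \<times> ({k} \<times> Z k)))"
    proof
      assume "x \<in> Yt \<times> Zt"
      then have h: "fst (fst x) \<in> J" "fst (snd x) \<in> K"
        "x \<in> ({fst (fst x)} \<times> Y (fst (fst x))) \<times> ({fst (snd x)} \<times> Z (fst (snd x)))"
        unfolding Yt_def Zt_def by (auto simp: mem_Times_iff)
      show "\<exists>l\<in>J \<times> K. x \<in> (case l of (j,k) \<Rightarrow> ({j} \<times> Y j) \<times> ({k} \<times> Z k))"
        using h by (intro bexI[where x="(fst (fst x), fst (snd x))"]) auto
    next
      assume "\<exists>l\<in>J \<times> K. x \<in> (case l of (j,k) \<Rightarrow> ({j} \<times> Y j) \<times> ({k} \<times> Z k))"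
      then obtain j k where "j \<in> J" "k \<in> K" "x \<in> ({j} \<times> Y j) \<times> ({k} \<times> Z k)" by blast
      then show "x \<in> Yt \<times> Zt" unfolding Yt_def Zt_def by auto
    qed
  next
    fix l l' assume ll: "l \<in> J \<times> K" "l' \<in> J \<times> K" "l \<noteq> l'"
    obtain j k where l: "l = (j,k)" "j \<in> J" "k \<in> K" using ll(1) by blast
    obtain j' k' where l': "l' = (j',k')" "j' \<in> J" "k' \<in> K" using ll(2) by blast
    show "(case l of (j,k) \<Rightarrow> Bf j k) \<inter> (case l' of (j,k) \<Rightarrow> Bf j k) = {}"
    proof (rule equals0I)
      fix b assume "b \<in> (case l of (j,k) \<Rightarrow> Bf j k) \<inter> (case l' of (j,k) \<Rightarrow> Bf j k)"
      then have b: "b \<in> Bf j k" "b \<in> Bf j' k'" using l l' by auto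
      obtain a where a: "a \<in> A" using nA by blast
      obtain b1 where b1: "b1 \<in> B" "Bf j k = pcomp B rB b1" "?g ` (j \<times> k) = A \<times> Bf j k" using Bf_comp[OF l(2,3)] by blast
      obtain b2 where b2: "b2 \<in> B" "Bf j' k' = pcomp B rB b2" "?g ` (j' \<times> k') = A \<times> Bf j' k'" using Bf_comp[OF l'(2,3)] by blast
      have jC': "j \<subseteq> C" "j' \<subseteq> C" using jC l(2) l'(2) by auto
      have kD': "k \<subseteq> D" "k' \<subseteq> D" using kD l(3) l'(3) by auto
      have "(a,b) \<in> ?g ` (j \<times> k)" using b1(3) a b(1) by simp
      then obtain z where z: "z \<in> j \<times> k" "(a,b) = ?g z" by blast
      have "f (a,b) = z" using z gi[of z] jC' kD' by auto
      then have m1: "f (a,b) \<in> j \<times> k" using z(1) by simp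
      have "(a,b) \<in> ?g ` (j' \<times> k')" using b2(3) a b(2) by simp
      then obtain z' where z': "z' \<in> j' \<times> k'" "(a,b) = ?g z'" by blast
      have "f (a,b) = z'" using z' gi[of z'] jC' kD' by auto
      then have m2: "f (a,b) \<in> j' \<times> k'" using z'(1) by simp
      have "j = j'" using compJ[OF l(2) l'(2), of "fst (f (a,b))"] m1 m2 by auto
      moreover have "k = k'" using compK[OF l(3) l'(3), of "snd (f (a,b))"] m1 m2 by auto
      ultimately show False using ll(3) l l' by simp
    qed
  next
    fix l l' assume ll: "l \<in> J \<times> K" "l' \<in> J \<times> K" "l \<noteq> l'"
    obtain j k where l: "l = (j,k)" using ll(1) by blast
    obtain j' k' where l': "l' = (j',k')" using ll(2) by blast
    show "(case l of (j,k) \<Rightarrow> ({j} \<times> Y j) \<times> ({k} \<times> Z k)) \<inter> (case l' of (j,k) \<Rightarrow> ({j} \<times> Y j) \<times> ({k} \<times> Z k)) = {}"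
    proof (rule equals0I)
      fix z assume "z \<in> (case l of (j,k) \<Rightarrow> ({j} \<times> Y j) \<times> ({k} \<times> Z k)) \<inter> (case l' of (j,k) \<Rightarrow> ({j} \<times> Y j) \<times> ({k} \<times> Z k))"
      then have "fst (fst z) = j" "fst (snd z) = k" "fst (fst z) = j'" "fst (snd z) = k'" using l l' by auto
      then show False using ll(3) l l' by simp
    qed
  next
    fix x y assume xy: "(x,y) \<in> rB" "x \<in> B" "y \<in> B"
    obtain l where l: "l \<in> J \<times> K" "x \<in> (case l of (j,k) \<Rightarrow> Bf j k)" using Bcov[of x] xy(2) by blast
    obtain j k where jk: "l = (j,k)" "j \<in> J" "k \<in> K" using l(1) by blast
    obtain b where b: "b \<in> B" "Bf j k = pcomp B rB b" using Bf_comp[OF jk(2,3)] by blast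
    have xb: "x \<in> pcomp B rB b" using l(2) jk(1) b(2) by simp
    have "pcomp B rB x = pcomp B rB b" by (rule comp_eq[OF xb])
    moreover have "y \<in> pcomp B rB x" using comp_rel[OF po_sub[OF pB] xy(1)] .
    ultimately have "y \<in> Bf j k" using b(2) by simp
    then show "\<exists>l\<in>J \<times> K. x \<in> (case l of (j,k) \<Rightarrow> Bf j k) \<and> y \<in> (case l of (j,k) \<Rightarrow> Bf j k)"
      using l jk(1) by auto
  next
    fix x y assume xy: "(x,y) \<in> prod_order rYt rZt" "x \<in> Yt \<times> Zt" "y \<in> Yt \<times> Zt"
    obtain j u k v where x: "x = ((j,u),(k,v))" by (cases x) auto
    obtain j' u' k' v' where y: "y = ((j',u'),(k',v'))" by (cases y) auto
    have e: "j = j'" "k = k'" "j \<in> J" "k \<in> K" using xy(1) x y unfolding rYt_def rZt_def by auto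
    have "x \<in> ({j} \<times> Y j) \<times> ({k} \<times> Z k)" using xy(2) x unfolding Yt_def Zt_def by auto
    moreover have "y \<in> ({j} \<times> Y j) \<times> ({k} \<times> Z k)" using xy(3) y e unfolding Yt_def Zt_def by auto
    ultimately show "\<exists>l\<in>J \<times> K. x \<in> (case l of (j,k) \<Rightarrow> ({j} \<times> Y j) \<times> ({k} \<times> Z k)) \<and>
        y \<in> (case l of (j,k) \<Rightarrow> ({j} \<times> Y j) \<times> ({k} \<times> Z k))"
      using e by (intro bexI[where x="(j,k)"]) auto
  next
    fix l assume l: "l \<in> J \<times> K"
    obtain j k where jk: "l = (j,k)" "j \<in> J" "k \<in> K" using l by blast
    have "order_iso (Bf j k) (rB \<inter> Bf j k \<times> Bf j k) (Y j \<times> Z k) (prod_order (rY j) (rZ k))"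
      using fam(10) jk(2,3) by blast
    then have "order_iso (Bf j k) rB (Y j \<times> Z k) (prod_order (rY j) (rZ k))" by (rule iso_restr_left')
    moreover have "order_iso (Y j \<times> Z k) (prod_order (rY j) (rZ k)) (({j} \<times> Y j) \<times> ({k} \<times> Z k)) (prod_order rYt rZt)"
      unfolding rYt_def rZt_def by (rule iso_prod[OF tag_iso[OF jk(2)] tag_iso[OF jk(3)]])
    ultimately have "order_iso (Bf j k) rB (({j} \<times> Y j) \<times> ({k} \<times> Z k)) (prod_order rYt rZt)" by (rule iso_trans)
    then show "order_iso (case l of (j,k) \<Rightarrow> Bf j k) rB (case l of (j,k) \<Rightarrow> ({j} \<times> Y j) \<times> ({k} \<times> Z k)) (prod_order rYt rZt)"
      using jk(1) by simp
  qed
  obtain YN :: "nat set" and rYN where yn: "partial_order_on YN rYN" "finite YN" "order_iso Yt rYt YN rYN"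
    using po_natify[OF pYt fYt] by blast
  obtain ZN :: "nat set" and rZN where zn: "partial_order_on ZN rZN" "finite ZN" "order_iso Zt rZt ZN rZN"
    using po_natify[OF pZt fZt] by blast
  have f1: "order_iso B rB (YN \<times> ZN) (prod_order rYN rZN)" by (rule iso_trans[OF isoB iso_prod[OF yn(3) zn(3)]])
  have f2: "order_iso C rC (W \<times> YN) (prod_order rW rYN)" by (rule iso_trans[OF isoC iso_prod[OF iso_refl yn(3)]])
  have f3: "order_iso D rD (X \<times> ZN) (prod_order rX rZN)" by (rule iso_trans[OF isoD iso_prod[OF iso_refl zn(3)]])
  show ?thesis
    apply (rule exI[of _ W], rule exI[of _ rW], rule exI[of _ X], rule exI[of _ rX])
    apply (rule exI[of _ YN], rule exI[of _ rYN], rule exI[of _ ZN], rule exI[of _ rZN])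
    using fam(1,2,7) yn(1) zn(1) f1 f2 f3 by blast
qed


theorem theorem5:
  fixes A :: "'a set" and rA :: "('a \<times> 'a) set"
    and B :: "'b set" and rB :: "('b \<times> 'b) set"
    and C :: "'c set" and rC :: "('c \<times> 'c) set"
    and D :: "'d set" and rD :: "('d \<times> 'd) set"
  assumes "partial_order_on A rA" and "partial_order_on B rB"
    and "partial_order_on C rC" and "partial_order_on D rD"
    and "finite A" and "finite B" and "finite C" and "finite D"
    and "connected_poset A rA" and "A \<noteq> {}"
    and "order_iso (A \<times> B) (prod_order rA rB) (C \<times> D) (prod_order rC rD)"
  shows "\<exists>(W :: nat set) rW (X :: nat set) rX (Y :: nat set) rY (Z :: nat set) rZ.
           partial_order_on W rW \<and> partial_order_on X rX \<and>
           partial_order_on Y rY \<and> partial_order_on Z rZ \<and>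
           order_iso A rA (W \<times> X) (prod_order rW rX) \<and>
           order_iso B rB (Y \<times> Z) (prod_order rY rZ) \<and>
           order_iso C rC (W \<times> Y) (prod_order rW rY) \<and>
           order_iso D rD (X \<times> Z) (prod_order rX rZ)"
proof (cases "B = {}")
  case False
  show ?thesis by (rule top_main[OF assms False])
next
  case True
  have "A \<times> B = {}" using True by simp
  then have "C \<times> D = {}" using iso_empty_iff[OF assms(11)] by simp
  then have CD: "C = {} \<or> D = {}" by simp
  obtain AN :: "nat set" and rAN where an: "partial_order_on AN rAN" "finite AN" "order_iso A rA AN rAN"
    using po_natify[OF assms(1) assms(5)] by blast
  have u1: "card {0::nat} = 1" by simp
  have up: "partial_order_on {0::nat} {(0,0)}" by (rule unit_po)
  show ?thesis
  proof (cases "C = {}")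
    case True
    obtain DN :: "nat set" and rDN where dn: "partial_order_on DN rDN" "finite DN" "order_iso D rD DN rDN"
      using po_natify[OF assms(4) assms(8)] by blast
    have 1: "order_iso A rA (AN \<times> {0::nat}) (prod_order rAN {(0,0)})"
      by (rule iso_trans[OF an(3) iso_sym[OF iso_unit_right[OF u1 up]]])
    have "order_iso {} rB {} (prod_order ({}::nat rel) rDN)" by (rule iso_empty)
    then have 2: "order_iso B rB ({} \<times> DN) (prod_order ({}::nat rel) rDN)" using \<open>B = {}\<close> by simp
    have "order_iso {} rC {} (prod_order rAN ({}::nat rel))" by (rule iso_empty)
    then have 3: "order_iso C rC (AN \<times> {}) (prod_order rAN ({}::nat rel))" using True by simp
    have 4: "order_iso D rD ({0::nat} \<times> DN) (prod_order {(0,0)} rDN)"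
      by (rule iso_trans[OF dn(3) iso_sym[OF iso_unit_left[OF u1 up]]])
    show ?thesis
      apply (rule exI[of _ AN], rule exI[of _ rAN], rule exI[of _ "{0::nat}"], rule exI[of _ "{(0,0)}"])
      apply (rule exI[of _ "{}"], rule exI[of _ "{}"], rule exI[of _ DN], rule exI[of _ rDN])
      using an(1) up partial_order_on_empty dn(1) 1 2 3 4 by blast
  next
    case False
    then have "D = {}" using CD by simp
    obtain CN :: "nat set" and rCN where cn: "partial_order_on CN rCN" "finite CN" "order_iso C rC CN rCN"
      using po_natify[OF assms(3) assms(7)] by blast
    have 1: "order_iso A rA ({0::nat} \<times> AN) (prod_order {(0,0)} rAN)"
      by (rule iso_trans[OF an(3) iso_sym[OF iso_unit_left[OF u1 up]]])
    have "order_iso {} rB {} (prod_order rCN ({}::nat rel))" by (rule iso_empty)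
    then have 2: "order_iso B rB (CN \<times> {}) (prod_order rCN ({}::nat rel))" using \<open>B = {}\<close> by simp
    have 3: "order_iso C rC ({0::nat} \<times> CN) (prod_order {(0,0)} rCN)"
      by (rule iso_trans[OF cn(3) iso_sym[OF iso_unit_left[OF u1 up]]])
    have "order_iso {} rD {} (prod_order rAN ({}::nat rel))" by (rule iso_empty)
    then have 4: "order_iso D rD (AN \<times> {}) (prod_order rAN ({}::nat rel))" using \<open>D = {}\<close> by simp
    show ?thesis
      apply (rule exI[of _ "{0::nat}"], rule exI[of _ "{(0,0)}"], rule exI[of _ AN], rule exI[of _ rAN])
      apply (rule exI[of _ CN], rule exI[of _ rCN], rule exI[of _ "{}"], rule exI[of _ "{}"])
      using an(1) up partial_order_on_empty cn(1) 1 2 3 4 by blast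
  qed
qed

end
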